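(* Let $\beta,\delta\in(0,1)$, $K>0$, $T>0$, and consider the controlled system $$f'=\tfrac12 fm\beta L-\delta f-\eta_1(t)f,\qquad m'=\tfrac12 fm\beta L-\delta m-\eta_2(t)m,\qquad L=1-\frac{f+m}{K},$$ with initial conditions $f(t_0)=f_0$, $m(t_0)=m_0$. Let $$U_4=\{(\eta_1,\eta_2):\ \eta_i\text{ measurable},\ 0\le\eta_1(t)\le1,\ 0\le\eta_2(t)\le1,\ t\in[0,T]\}$$ and $J_4(\eta_1,\eta_2)=\int_0^T\big(-(f+m)-\tfrac12(\eta_1^2+\eta_2^2)\big)dt$. Then there exists $(\eta_1^*,\eta_2^* )\in U_4$ with $J_4(\eta_1^*,\eta_2^* )=\max_{(\eta_1,\eta_2)}J_4(\eta_1,\eta_2)$.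
   Context: $f,m$ are female and male densities, and $\eta_1,\eta_2$ are time-dependent female and male harvesting rates. *)

theory Defs
  imports "HOL-Analysis.Analysis"
begin

definition U4 :: "real \<Rightarrow> ((real \<Rightarrow> real) \<times> (real \<Rightarrow> real)) set" where
  "U4 T = {(e1, e2). set_borel_measurable lborel {0..T} e1 \<and> set_borel_measurable lborel {0..T} e2 \<and>
     (\<forall>t\<in>{0..T}. 0 \<le> e1 t \<and> e1 t \<le> 1 \<and> 0 \<le> e2 t \<and> e2 t \<le> 1)}"

definition Lfac :: "real \<Rightarrow> real \<Rightarrow> real \<Rightarrow> real" where
  "Lfac K x y = 1 - (x + y) / K"

definition rhs_f :: "real \<Rightarrow> real \<Rightarrow> real \<Rightarrow> real \<Rightarrow> real \<Rightarrow> real \<Rightarrow> real" where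
  "rhs_f \<beta> \<delta> K e1 x y = 1/2 * x * y * \<beta> * Lfac K x y - \<delta> * x - e1 * x"

definition rhs_m :: "real \<Rightarrow> real \<Rightarrow> real \<Rightarrow> real \<Rightarrow> real \<Rightarrow> real \<Rightarrow> real" where
  "rhs_m \<beta> \<delta> K e2 x y = 1/2 * x * y * \<beta> * Lfac K x y - \<delta> * y - e2 * y"

text \<open>(f,m) is a (Caratheodory, i.e. absolutely continuous) solution on [0,T] of the system
  driven by controls (e1,e2) with f(0)=f0, m(0)=m0, written in integral form.\<close>
definition is_state ::
  "real \<Rightarrow> real \<Rightarrow> real \<Rightarrow> real \<Rightarrow> real \<Rightarrow> real \<Rightarrow> (real \<Rightarrow> real) \<Rightarrow> (real \<Rightarrow> real)
   \<Rightarrow> (real \<Rightarrow> real) \<Rightarrow> (real \<Rightarrow> real) \<Rightarrow> bool" where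
  "is_state \<beta> \<delta> K T f0 m0 e1 e2 f m \<longleftrightarrow>
     continuous_on {0..T} f \<and> continuous_on {0..T} m \<and>
     (\<forall>t\<in>{0..T}.
        set_integrable lborel {0..t} (\<lambda>s. rhs_f \<beta> \<delta> K (e1 s) (f s) (m s)) \<and>
        set_integrable lborel {0..t} (\<lambda>s. rhs_m \<beta> \<delta> K (e2 s) (f s) (m s)) \<and>
        f t = f0 + (LINT s:{0..t}|lborel. rhs_f \<beta> \<delta> K (e1 s) (f s) (m s)) \<and>
        m t = m0 + (LINT s:{0..t}|lborel. rhs_m \<beta> \<delta> K (e2 s) (f s) (m s)))"

definition J4 :: "real \<Rightarrow> (real \<Rightarrow> real) \<Rightarrow> (real \<Rightarrow> real) \<Rightarrow> (real \<Rightarrow> real) \<Rightarrow> (real \<Rightarrow> real) \<Rightarrow> real" where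
  "J4 T e1 e2 f m = (LINT t:{0..T}|lborel. - (f t + m t) - 1/2 * ((e1 t)\<^sup>2 + (e2 t)\<^sup>2))"

end

theory Submission
  imports Defs "HOL-Complex_Analysis.Great_Picard"
begin

lemma sint_bdd:
  fixes h :: "real \<Rightarrow> real"
  assumes "h \<in> borel_measurable lborel" "\<And>x. x \<in> {a..b} \<Longrightarrow> \<bar>h x\<bar> \<le> B"
  shows "set_integrable lborel {a..b} h"
  unfolding set_integrable_def
  apply (rule integrableI_bounded_set[where A="{a..b}" and B=B])
  using assms by (auto simp: indicator_def emeasure_lborel_Icc_eq)

lemma sint_Icc_Ioc:
  fixes h :: "real \<Rightarrow> real"
  assumes "h \<in> borel_measurable lborel"
  shows "(LINT x:{a..b}|lborel. h x) = (LINT x:{a<..b}|lborel. h x)"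
proof (rule set_integral_cong_set)
  show "set_borel_measurable lborel {a<..b} h" "set_borel_measurable lborel {a..b} h"
    using assms unfolding set_borel_measurable_def by measurable
  show "AE x in lborel. (x \<in> {a<..b}) = (x \<in> {a..b})"
    using AE_lborel_singleton[of a] by eventually_elim auto
qed

lemma sint_split:
  fixes h :: "real \<Rightarrow> real"
  assumes "h \<in> borel_measurable lborel" "\<And>x. x \<in> {a..c} \<Longrightarrow> \<bar>h x\<bar> \<le> B" "a \<le> b" "b \<le> c"
  shows "(LINT x:{a..c}|lborel. h x) = (LINT x:{a..b}|lborel. h x) + (LINT x:{b..c}|lborel. h x)"
proof -
  have i: "set_integrable lborel {a..c} h" using sint_bdd assms by blast
  have "{a..c} = {a..b} \<union> {b<..c}" using assms by auto
  moreover have d: "{a..b} \<inter> {b<..c} = {}" by auto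
  moreover have i1: "set_integrable lborel {a..b} h" by (rule set_integrable_subset[OF i]) (use assms in auto)
  moreover have i2: "set_integrable lborel {b<..c} h" by (rule set_integrable_subset[OF i]) (use assms in auto)
  ultimately have "(LINT x:{a..c}|lborel. h x) = (LINT x:{a..b}|lborel. h x) + (LINT x:{b<..c}|lborel. h x)"
    using set_integral_Un[OF d i1 i2] by simp
  then show ?thesis using sint_Icc_Ioc[OF assms(1)] by simp
qed

lemma sint_bound:
  fixes h :: "real \<Rightarrow> real"
  assumes "h \<in> borel_measurable lborel" "\<And>x. x \<in> {a<..b} \<Longrightarrow> \<bar>h x\<bar> \<le> B" "a \<le> b"
  shows "\<bar>LINT x:{a..b}|lborel. h x\<bar> \<le> B * (b - a)"
proof -
  have i: "set_integrable lborel {a<..b} h"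
    unfolding set_integrable_def
    apply (rule integrableI_bounded_set[where A="{a<..b}" and B=B])
    using assms by (auto simp: indicator_def emeasure_lborel_Ioc)
  have ic: "set_integrable lborel {a<..b} (\<lambda>_. B)"
    unfolding set_integrable_def
    apply (rule integrableI_bounded_set[where A="{a<..b}" and B="\<bar>B\<bar>"])
    using assms by (auto simp: indicator_def emeasure_lborel_Ioc)
  have "\<bar>LINT x:{a<..b}|lborel. h x\<bar> \<le> (LINT x:{a<..b}|lborel. \<bar>h x\<bar>)"
    using set_integral_norm_bound[OF i] by simp
  also have "\<dots> \<le> (LINT x:{a<..b}|lborel. B)"
    apply (rule set_integral_mono)
    using i set_integrable_abs ic assms(2) by auto
  also have "\<dots> = B * (b - a)"
    using assms(3) by (simp add: set_integral_const emeasure_lborel_Ioc)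
  finally show ?thesis using sint_Icc_Ioc[OF assms(1)] by simp
qed

lemma sint_nonpos:
  fixes h :: "real \<Rightarrow> real"
  assumes "h \<in> borel_measurable lborel" "\<And>x. x \<in> {a<..b} \<Longrightarrow> h x \<le> 0"
  shows "(LINT x:{a..b}|lborel. h x) \<le> 0"
proof -
  have "(LINT x:{a<..b}|lborel. h x) \<le> 0"
    unfolding set_lebesgue_integral_def
    using integral_nonneg_AE[of "\<lambda>x. - (indicator {a<..b} x *\<^sub>R h x)" lborel] assms(2)
    by (auto simp: indicator_def)
  then show ?thesis using sint_Icc_Ioc[OF assms(1)] by simp
qed

definition Prim :: "(real \<Rightarrow> real) \<Rightarrow> real \<Rightarrow> real" where
  "Prim h t = (LINT s:{0..t}|lborel. h s)"

lemma Prim_lip: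
  fixes h :: "real \<Rightarrow> real"
  assumes "h \<in> borel_measurable lborel" "\<And>x. \<bar>h x\<bar> \<le> B"
  shows "\<bar>Prim h t - Prim h s\<bar> \<le> B * \<bar>t - s\<bar>"
proof -
  have B: "0 \<le> B" using assms(2)[of 0] by simp
  have main: "\<bar>Prim h t - Prim h s\<bar> \<le> B * \<bar>t - s\<bar>" if "s \<le> t" for s t
  proof (cases "0 \<le> s")
    case True
    then have "Prim h t = Prim h s + (LINT x:{s..t}|lborel. h x)"
      unfolding Prim_def using sint_split[OF assms(1), of 0 t B s] assms(2) that by auto
    then show ?thesis using sint_bound[OF assms(1), of s t B] assms(2) that by auto
  next
    case False
    then have s0: "Prim h s = 0" unfolding Prim_def set_lebesgue_integral_def by simp
    show ?thesis
    proof (cases "0 \<le> t")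
      case True
      have "\<bar>Prim h t\<bar> \<le> B * (t - 0)" unfolding Prim_def
        using sint_bound[OF assms(1), of 0 t B] assms(2) True by auto
      also have "\<dots> \<le> B * \<bar>t - s\<bar>" using False B by (intro mult_left_mono) auto
      finally show ?thesis using s0 by simp
    next
      case False
      then show ?thesis using s0 B unfolding Prim_def set_lebesgue_integral_def by simp
    qed
  qed
  show ?thesis
  proof (cases "s \<le> t")
    case True then show ?thesis using main by blast
  next
    case False then show ?thesis using main[of t s] by (simp add: abs_minus_commute)
  qed
qed


lemma Prim_split:
  fixes h :: "real \<Rightarrow> real"
  assumes "h \<in> borel_measurable lborel" "\<And>x. \<bar>h x\<bar> \<le> B" "0 \<le> s" "s \<le> t"
  shows "Prim h t = Prim h s + (LINT x:{s..t}|lborel. h x)"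
  unfolding Prim_def using sint_split[OF assms(1), of 0 t B s] assms by auto

lemma Prim_0: "Prim h 0 = 0"
  unfolding Prim_def set_lebesgue_integral_def
proof (rule integral_eq_zero_AE)
  show "AE x in lborel. indicator {0..0} x *\<^sub>R h x = 0"
    using AE_lborel_singleton[of 0] by eventually_elim (auto simp: indicator_def)
qed

lemma Prim_cont:
  fixes h :: "real \<Rightarrow> real"
  assumes "h \<in> borel_measurable lborel" "\<And>x. \<bar>h x\<bar> \<le> B"
  shows "continuous_on UNIV (Prim h)"
proof -
  have B: "0 \<le> B" using assms(2)[of 0] by simp
  have "B-lipschitz_on UNIV (Prim h)"
    by (rule lipschitz_onI) (use Prim_lip[OF assms] B in \<open>auto simp: dist_real_def\<close>)
  then show ?thesis by (rule lipschitz_on_continuous_on)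
qed

lemma Prim_lim:
  fixes g :: "nat \<Rightarrow> real \<Rightarrow> real"
  assumes gm: "\<And>k. g k \<in> borel_measurable lborel" and Gm: "G \<in> borel_measurable lborel"
    and bnd: "\<And>k s. \<bar>g k s\<bar> \<le> C"
    and conv: "AE s in lborel. s \<in> {0..t} \<longrightarrow> (\<lambda>k. g k s) \<longlonglongrightarrow> G s"
  shows "(\<lambda>k. Prim (g k) t) \<longlonglongrightarrow> Prim G t"
  unfolding Prim_def set_lebesgue_integral_def
proof (rule integral_dominated_convergence[where w="\<lambda>s. indicator {0..t} s * C"])
  show "(\<lambda>s. indicator {0..t} s *\<^sub>R G s) \<in> borel_measurable lborel" using Gm by measurable
  show "(\<lambda>s. indicator {0..t} s *\<^sub>R g k s) \<in> borel_measurable lborel" for k using gm[of k] by measurable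
  show "integrable lborel (\<lambda>s. indicator {0..t} s * C)"
    by (intro integrable_mult_left integrable_real_indicator) (auto simp: emeasure_lborel_Icc_eq)
  show "AE s in lborel. (\<lambda>k. indicator {0..t} s *\<^sub>R g k s) \<longlonglongrightarrow> indicator {0..t} s *\<^sub>R G s"
    using conv by eventually_elim (auto simp: indicator_def)
  show "AE s in lborel. norm (indicator {0..t} s *\<^sub>R g k s) \<le> indicator {0..t} s * C" for k
    using bnd by (auto simp: indicator_def)
qed

lemma int_pow:
  fixes t :: real
  assumes "0 \<le> t"
  shows "(LINT s:{0..t}|lborel. s^k) = t^(Suc k) / real (Suc k)"
proof -
  have "(LINT s:{0..t}|lborel. s^k) = (LBINT s=ereal 0..ereal t. s^k)"
    using interval_integral_Icc[OF assms, of "\<lambda>s. s^k"] by simp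
  also have "\<dots> = t^(Suc k) / real (Suc k) - 0^(Suc k) / real (Suc k)"
  proof (rule interval_integral_FTC_finite)
    show "continuous_on {min 0 t..max 0 t} (\<lambda>s. s^k)" by (intro continuous_intros)
    fix x
    have "((\<lambda>s. s^(Suc k) / real (Suc k)) has_real_derivative x^k) (at x within {min 0 t..max 0 t})"
    proof -
      have "((\<lambda>s. s^(Suc k)) has_real_derivative real (Suc k) * x^k) (at x within {min 0 t..max 0 t})"
        using DERIV_pow[of "Suc k" x] by (simp add: has_field_derivative_at_within)
      from DERIV_cdivide[OF this, of "real (Suc k)"] show ?thesis by simp
    qed
    then show "((\<lambda>s. s^(Suc k) / real (Suc k)) has_vector_derivative x^k) (at x within {min 0 t..max 0 t})"
      by (simp add: has_real_derivative_iff_has_vector_derivative)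
  qed
  finally show ?thesis by simp
qed

lemma Prim_diff:
  fixes g h :: "real \<Rightarrow> real"
  assumes "g \<in> borel_measurable lborel" "h \<in> borel_measurable lborel" "\<And>x. \<bar>g x\<bar> \<le> B" "\<And>x. \<bar>h x\<bar> \<le> B"
  shows "Prim g t - Prim h t = Prim (\<lambda>s. g s - h s) t"
  unfolding Prim_def
  by (rule set_integral_diff(2)[symmetric]) (use sint_bdd assms in blast)+

lemma Prim_abs_le:
  fixes g h :: "real \<Rightarrow> real"
  assumes "g \<in> borel_measurable lborel" "h \<in> borel_measurable lborel" "\<And>x. \<bar>g x\<bar> \<le> B" "\<And>x. x \<in> {0..t} \<Longrightarrow> \<bar>h x\<bar> \<le> C"
    and le: "\<And>x. x \<in> {0..t} \<Longrightarrow> \<bar>g x\<bar> \<le> h x"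
  shows "\<bar>Prim g t\<bar> \<le> Prim h t"
proof -
  have ig: "set_integrable lborel {0..t} g" using sint_bdd assms by blast
  have ih: "set_integrable lborel {0..t} h" using sint_bdd assms by blast
  have "\<bar>Prim g t\<bar> \<le> (LINT s:{0..t}|lborel. \<bar>g s\<bar>)"
    unfolding Prim_def using set_integral_norm_bound[OF ig] by simp
  also have "\<dots> \<le> Prim h t" unfolding Prim_def
    by (rule set_integral_mono) (use ig ih le set_integrable_abs in auto)
  finally show ?thesis .
qed

lemma barrier:
  fixes h \<phi> :: "real \<Rightarrow> real"
  assumes hm: "h \<in> borel_measurable lborel" and hb: "\<And>x. \<bar>h x\<bar> \<le> B"
    and cont: "continuous_on {0..T} \<phi>"
    and eq: "\<And>t. t \<in> {0..T} \<Longrightarrow> \<phi> t = \<phi> 0 + Prim h t"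
    and c0: "\<phi> 0 \<le> c" and neg: "\<And>s. s \<in> {0..T} \<Longrightarrow> \<phi> s > c \<Longrightarrow> h s \<le> 0"
    and t: "t \<in> {0..T}"
  shows "\<phi> t \<le> c"
proof (rule ccontr)
  assume nt: "\<not> \<phi> t \<le> c"
  define A where "A = {s \<in> {0..t}. \<phi> s \<le> c}"
  have ct: "continuous_on {0..t} \<phi>" using cont t by (auto intro: continuous_on_subset)
  have clA: "closed A" unfolding A_def
    using continuous_on_closed_Collect_le[OF ct continuous_on_const] by simp
  have 0: "0 \<in> A" using c0 t by (auto simp: A_def)
  have bdd: "bdd_above A" unfolding A_def by (auto intro: bdd_aboveI[where M=t])
  define s0 where "s0 = Sup A"
  have s0A: "s0 \<in> A" unfolding s0_def using closed_contains_Sup[OF _ bdd clA] 0 by blast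
  have s0le: "s0 \<le> t" "0 \<le> s0" "\<phi> s0 \<le> c" using s0A by (auto simp: A_def)
  have gt: "\<phi> x > c" if "x \<in> {s0<..t}" for x
  proof (rule ccontr)
    assume "\<not> c < \<phi> x"
    then have "x \<in> A" using that s0le by (auto simp: A_def)
    then have "x \<le> s0" unfolding s0_def using bdd by (simp add: cSup_upper)
    then show False using that by auto
  qed
  have s0T: "s0 \<in> {0..T}" using s0le t by auto
  have "\<phi> t = \<phi> s0 + (LINT x:{s0..t}|lborel. h x)"
    using eq[OF t] eq[OF s0T] Prim_split[OF hm hb s0le(2,1)] by linarith
  also have "(LINT x:{s0..t}|lborel. h x) \<le> 0"
    apply (rule sint_nonpos[OF hm])
    using gt neg t s0le by auto
  finally show False using s0le nt by simp
qed

lemma nonneg_lin: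
  fixes g \<phi> :: "real \<Rightarrow> real"
  assumes gm: "g \<in> borel_measurable lborel" and gb: "\<And>x. \<bar>g x\<bar> \<le> G"
    and cont: "continuous_on UNIV \<phi>" and phb: "\<And>x. \<bar>\<phi> x\<bar> \<le> P"
    and eq: "\<And>t. t \<in> {0..T} \<Longrightarrow> \<phi> t = \<phi> 0 + Prim (\<lambda>s. \<phi> s * g s) t"
    and c0: "0 \<le> \<phi> 0"
    and t1: "t1 \<in> {0..T}"
  shows "0 \<le> \<phi> t1"
proof (rule ccontr)
  assume nt: "\<not> 0 \<le> \<phi> t1"
  have G0: "0 \<le> G" using gb[of 0] by simp
  have pm: "\<phi> \<in> borel_measurable lborel" using borel_measurable_continuous_onI[OF cont] by simp
  have hm: "(\<lambda>s. \<phi> s * g s) \<in> borel_measurable lborel"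
    using pm gm by (rule borel_measurable_times)
  have P0: "0 \<le> P" using phb[of 0] by simp
  have hb: "\<bar>\<phi> x * g x\<bar> \<le> P * G" for x
  proof -
    have "\<bar>\<phi> x\<bar> * \<bar>g x\<bar> \<le> P * G" by (rule mult_mono[OF phb gb P0]) simp
    then show ?thesis by (simp add: abs_mult)
  qed
  define A where "A = {s \<in> {0..t1}. 0 \<le> \<phi> s}"
  have ct: "continuous_on {0..t1} \<phi>" using cont by (auto intro: continuous_on_subset)
  have clA: "closed A" unfolding A_def
    using continuous_on_closed_Collect_le[OF continuous_on_const ct] by simp
  have 0: "0 \<in> A" using c0 t1 by (auto simp: A_def)
  have bdd: "bdd_above A" unfolding A_def by (auto intro: bdd_aboveI[where M=t1])
  define s0 where "s0 = Sup A"
  have s0A: "s0 \<in> A" unfolding s0_def using closed_contains_Sup[OF _ bdd clA] 0 by blast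
  have s0le: "s0 \<le> t1" "0 \<le> s0" "0 \<le> \<phi> s0" using s0A by (auto simp: A_def)
  have lt: "\<phi> x < 0" if "x \<in> {s0<..t1}" for x
  proof (rule ccontr)
    assume "\<not> \<phi> x < 0"
    then have "x \<in> A" using that s0le by (auto simp: A_def)
    then have "x \<le> s0" unfolding s0_def using bdd by (simp add: cSup_upper)
    then show False using that by auto
  qed
  have s0t1: "s0 < t1" using s0le nt by (cases "s0 = t1") auto
  define e where "e = min (t1 - s0) (1 / (2 * G + 2))"
  have e0: "0 < e" using s0t1 G0 by (simp add: e_def)
  have eG: "G * e \<le> 1/2"
  proof -
    have "G * e \<le> G * (1 / (2 * G + 2))" using G0 by (intro mult_left_mono) (auto simp: e_def)
    also have "\<dots> \<le> 1/2" using G0 by (simp add: field_simps)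
    finally show ?thesis .
  qed
  define t2 where "t2 = s0 + e"
  have t2le: "t2 \<le> t1" "s0 < t2" using e0 by (auto simp: t2_def e_def)
  obtain t3 where t3: "t3 \<in> {s0..t2}" and t3min: "\<And>x. x \<in> {s0..t2} \<Longrightarrow> \<phi> t3 \<le> \<phi> x"
  proof -
    have "continuous_on {s0..t2} \<phi>" using cont by (auto intro: continuous_on_subset)
    then have "\<exists>x\<in>{s0..t2}. \<forall>y\<in>{s0..t2}. \<phi> x \<le> \<phi> y"
      using continuous_attains_inf[of "{s0..t2}" \<phi>] t2le by auto
    then show ?thesis using that by blast
  qed
  define u where "u = \<phi> t3"
  have un: "u < 0"
  proof -
    have "\<phi> t3 \<le> \<phi> t2" using t3min[of t2] t2le by auto
    moreover have "\<phi> t2 < 0" using lt[of t2] t2le by auto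
    ultimately show ?thesis by (simp add: u_def)
  qed
  have t3s: "s0 < t3"
  proof (rule ccontr)
    assume "\<not> s0 < t3" then have "t3 = s0" using t3 by auto
    then have "u = \<phi> s0" by (simp add: u_def)
    then show False using un s0le(3) by simp
  qed
  have t3T: "t3 \<in> {0..T}" using t3 t2le t1 s0le by auto
  have s0T: "s0 \<in> {0..T}" using s0le t1 by auto
  have s0t3: "s0 \<le> t3" using t3s by simp
  have e3: "u = \<phi> s0 + (LINT x:{s0..t3}|lborel. \<phi> x * g x)"
    using eq[OF t3T] eq[OF s0T] Prim_split[OF hm hb s0le(2) s0t3] unfolding u_def by linarith
  have "\<bar>LINT x:{s0..t3}|lborel. \<phi> x * g x\<bar> \<le> (- u * G) * (t3 - s0)"
  proof (rule sint_bound[OF hm])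
    fix x assume x: "x \<in> {s0<..t3}"
    have "u \<le> \<phi> x" "\<phi> x < 0" using t3min[of x] lt[of x] x t3 t2le by (auto simp: u_def)
    then have "\<bar>\<phi> x\<bar> \<le> - u" by simp
    then have "\<bar>\<phi> x\<bar> * \<bar>g x\<bar> \<le> (- u) * G" using gb[of x] by (intro mult_mono) auto
    then show "\<bar>\<phi> x * g x\<bar> \<le> - u * G" by (simp add: abs_mult)
  qed (use t3s in auto)
  also have "\<dots> \<le> (- u * G) * e" using t3 un G0 by (intro mult_left_mono) (auto simp: t2_def mult_nonpos_nonneg)
  also have "\<dots> = - u * (G * e)" by simp
  also have "\<dots> \<le> - u * (1/2)" using un eG by (intro mult_left_mono) auto
  finally have "u \<ge> \<phi> s0 + u / 2" using e3 by linarith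
  then show False using un s0le by linarith
qed

lemma para_law:
  fixes a b :: "'a::real_inner"
  shows "norm (a - b)^2 = 2 * norm a^2 + 2 * norm b^2 - 4 * norm ((1/2) *\<^sub>R (a + b))^2"
  by (simp add: power2_norm_eq_inner inner_diff_left inner_diff_right inner_add_left inner_add_right
      inner_commute algebra_simps)

lemma int_supp:
  fixes g :: "real \<Rightarrow> real"
  assumes "S \<in> sets lborel" "emeasure lborel S < \<infinity>" "g \<in> borel_measurable lborel"
    "\<And>t. \<bar>g t\<bar> \<le> C" "\<And>t. t \<notin> S \<Longrightarrow> g t = 0"
  shows "integrable lborel g"
  by (rule integrableI_bounded_set[where A=S and B=C]) (use assms in auto)

lemma aux_arith: "(x1::real) \<le> x2 + x3 \<Longrightarrow> x4 < x5 + x3 \<Longrightarrow> x5 \<le> x6 \<Longrightarrow> 2*x4 + 2*x1 - 4*x6 \<le> 2*(x5+x3) + 2*(x2+x3) - 4*x5"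
  by (simp add: algebra_simps)

lemma mazur:
  fixes x :: "nat \<Rightarrow> real \<Rightarrow> real \<times> real"
  assumes S: "S \<in> sets lborel" "emeasure lborel S < \<infinity>"
    and xm: "\<And>j. x j \<in> borel_measurable lborel"
    and xb: "\<And>j t. norm (x j t) \<le> B"
    and xz: "\<And>j t. t \<notin> S \<Longrightarrow> x j t = 0"
  shows "\<exists>w N. (\<forall>k j. 0 \<le> w k j) \<and> (\<forall>k. (\<Sum>j<N k. w k j) = 1) \<and> (\<forall>k j. j < k \<longrightarrow> w k j = 0) \<and>
     (AE t in lborel. convergent (\<lambda>k. \<Sum>j<N k. w k j *\<^sub>R x j t))"
proof -
  note [measurable] = xm
  have B0: "0 \<le> B" using xb[of 0 0] norm_ge_zero order_trans by blast
  define cmb :: "nat \<times> (nat \<Rightarrow> real) \<Rightarrow> real \<Rightarrow> real \<times> real"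
    where "cmb c t = (\<Sum>j<fst c. snd c j *\<^sub>R x j t)" for c t
  define valid where "valid n c \<longleftrightarrow> (\<forall>j. 0 \<le> snd c j) \<and> (\<forall>j<n. snd c j = 0) \<and>
      (\<forall>j\<ge>fst c. snd c j = 0) \<and> (\<Sum>j<fst c. snd c j) = 1" for n and c :: "nat \<times> (nat \<Rightarrow> real)"
  define \<Phi> where "\<Phi> c = integral\<^sup>L lborel (\<lambda>t. (norm (cmb c t))\<^sup>2)" for c :: "nat \<times> (nat \<Rightarrow> real)"
  define \<mu> where "\<mu> = measure lborel S"
  have cmbm[measurable]: "cmb c \<in> borel_measurable lborel" for c
    unfolding cmb_def by measurable
  have cmbz: "cmb c t = 0" if "t \<notin> S" for c t
    unfolding cmb_def using xz[OF that] by simp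
  have cmbb: "norm (cmb c t) \<le> B" if "valid n c" for n c t
  proof -
    have "norm (cmb c t) \<le> (\<Sum>j<fst c. norm (snd c j *\<^sub>R x j t))"
      unfolding cmb_def by (rule norm_sum)
    also have "\<dots> \<le> (\<Sum>j<fst c. snd c j * B)"
      using that xb by (intro sum_mono) (auto simp: valid_def intro: mult_left_mono)
    also have "\<dots> = B" using that by (simp add: valid_def sum_distrib_right[symmetric])
    finally show ?thesis .
  qed
  have intg: "integrable lborel g" if "g \<in> borel_measurable lborel" "\<And>t. \<bar>g t\<bar> \<le> C"
    "\<And>t. t \<notin> S \<Longrightarrow> g t = 0" for g :: "real \<Rightarrow> real" and C
    by (rule int_supp[OF S]) (use that in auto)
  have cmb_int: "integrable lborel (\<lambda>t. (norm (cmb c t))\<^sup>2)" if "valid n c" for n c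
    apply (rule intg[where C="B^2"])
    using cmbb[OF that] cmbz by (auto intro!: power_mono)
  have valid_mono: "valid n c" if "valid m c" "n \<le> m" for n m c
    using that by (auto simp: valid_def)
  have cmb_ext: "(\<Sum>j<M. snd c j *\<^sub>R x j t) = cmb c t" if "valid n c" "fst c \<le> M" for n c M t
    unfolding cmb_def
    by (rule sum.mono_neutral_right) (use that in \<open>auto simp: valid_def\<close>)
  have wsum: "(\<Sum>j<M. snd c j) = 1" if "valid n c" "fst c \<le> M" for n c M
  proof -
    have "(\<Sum>j<M. snd c j) = (\<Sum>j<fst c. snd c j)"
      by (rule sum.mono_neutral_right) (use that in \<open>auto simp: valid_def\<close>)
    then show ?thesis using that by (simp add: valid_def)
  qed
  define mid where "mid c1 c2 = (max (fst c1) (fst c2), \<lambda>j. (snd c1 j + snd c2 j) / 2)" for c1 c2 :: "nat \<times> (nat \<Rightarrow> real)"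
  have mid_valid: "valid n (mid c1 c2)" if "valid n c1" "valid n c2" for n c1 c2
  proof -
    have "(\<Sum>j<max (fst c1) (fst c2). snd c1 j) = 1" by (rule wsum[OF that(1)]) simp
    moreover have "(\<Sum>j<max (fst c1) (fst c2). snd c2 j) = 1" by (rule wsum[OF that(2)]) simp
    ultimately show ?thesis using that
      by (auto simp: valid_def mid_def sum_divide_distrib[symmetric] sum.distrib)
  qed
  have mid_cmb: "cmb (mid c1 c2) t = (1/2) *\<^sub>R (cmb c1 t + cmb c2 t)" if "valid n c1" "valid n c2" for n c1 c2 t
  proof -
    have "cmb (mid c1 c2) t = (1/2) *\<^sub>R ((\<Sum>j<max (fst c1) (fst c2). snd c1 j *\<^sub>R x j t) +
        (\<Sum>j<max (fst c1) (fst c2). snd c2 j *\<^sub>R x j t))"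
      by (simp add: cmb_def mid_def sum.distrib[symmetric] scaleR_sum_right add_divide_distrib scaleR_add_left scaleR_add_right)
    also have "\<dots> = (1/2) *\<^sub>R (cmb c1 t + cmb c2 t)"
      using cmb_ext[OF that(1)] cmb_ext[OF that(2)] by simp
    finally show ?thesis .
  qed
  define single where "single n = (Suc n, \<lambda>j. if j = n then (1::real) else 0)" for n
  have single_valid: "valid n (single n)" for n
    by (auto simp: valid_def single_def)
  have \<Phi>_nonneg: "0 \<le> \<Phi> c" for c unfolding \<Phi>_def by (rule integral_nonneg_AE) auto
  have \<Phi>_le: "\<Phi> c \<le> B^2 * \<mu>" if "valid n c" for n c
  proof -
    have "\<Phi> c \<le> integral\<^sup>L lborel (\<lambda>t. B^2 * indicator S t)"
      unfolding \<Phi>_def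
    proof (rule integral_mono[OF cmb_int[OF that]])
      show "integrable lborel (\<lambda>t. B\<^sup>2 * indicator S t)"
        using S by (intro integrable_mult_right) (simp add: less_top)
      show "(norm (cmb c t))\<^sup>2 \<le> B\<^sup>2 * indicator S t" for t
        using cmbb[OF that, of t] cmbz[of t c] by (cases "t \<in> S") (auto intro!: power_mono)
    qed
    also have "\<dots> = B^2 * \<mu>" using S by (simp add: \<mu>_def less_top)
    finally show ?thesis .
  qed
  define d where "d n = Inf (\<Phi> ` Collect (valid n))" for n
  have ne: "\<Phi> ` Collect (valid n) \<noteq> {}" for n using single_valid[of n] by blast
  have bdd: "bdd_below (\<Phi> ` Collect (valid n))" for n
    by (rule bdd_belowI[where m=0]) (use \<Phi>_nonneg in blast)
  have d_le: "d n \<le> \<Phi> c" if "valid n c" for n c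
    unfolding d_def using that bdd by (auto intro: cInf_lower)
  have d_mono: "d n \<le> d m" if "n \<le> m" for n m
    unfolding d_def using ne bdd valid_mono[OF _ that]
    by (intro cInf_superset_mono) auto
  have d_ub: "d n \<le> B^2 * \<mu>" for n using d_le[OF single_valid] \<Phi>_le[OF single_valid] by (meson order_trans)
  have inc: "incseq d" using d_mono by (auto simp: incseq_def)
  have bddd: "bdd_above (range d)" by (rule bdd_aboveI[where M="B^2*\<mu>"]) (use d_ub in auto)
  define D where "D = (SUP n. d n)"
  have dD: "d \<longlonglongrightarrow> D" unfolding D_def by (rule LIMSEQ_incseq_SUP[OF bddd inc])
  have d_leD: "d n \<le> D" for n unfolding D_def by (rule cSUP_upper[OF UNIV_I bddd])
  have "\<forall>n. \<exists>c. valid n c \<and> \<Phi> c < d n + 1 / (Suc n)"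
  proof
    fix n
    have "Inf (\<Phi> ` Collect (valid n)) < d n + 1 / Suc n" unfolding d_def by simp
    from cInf_lessD[OF ne this] show "\<exists>c. valid n c \<and> \<Phi> c < d n + 1 / (Suc n)" by auto
  qed
  then obtain c where cv: "\<And>n. valid n (c n)" and c\<Phi>: "\<And>n. \<Phi> (c n) < d n + 1 / (Suc n)"
    by metis
  define \<epsilon> where "\<epsilon> n = 2 * (D - d n) + 4 / Suc n" for n
  have cauchy: "integral\<^sup>L lborel (\<lambda>t. (norm (cmb (c n) t - cmb (c m) t))\<^sup>2) \<le> \<epsilon> n" if "n \<le> m" for n m
  proof -
    have vm: "valid n (c m)" using valid_mono[OF cv that] .
    have vmid: "valid n (mid (c n) (c m))" using mid_valid[OF cv vm] .
    have pt: "(norm (cmb (c n) t - cmb (c m) t))\<^sup>2 = 2 * (norm (cmb (c n) t))\<^sup>2 + 2 * (norm (cmb (c m) t))\<^sup>2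
        - 4 * (norm (cmb (mid (c n) (c m)) t))\<^sup>2" for t
      using para_law[of "cmb (c n) t" "cmb (c m) t"] mid_cmb[OF cv vm] by simp
    have "integral\<^sup>L lborel (\<lambda>t. (norm (cmb (c n) t - cmb (c m) t))\<^sup>2) = 2 * \<Phi> (c n) + 2 * \<Phi> (c m) - 4 * \<Phi> (mid (c n) (c m))"
      unfolding pt \<Phi>_def
      using cmb_int[OF cv[of n]] cmb_int[OF vm] cmb_int[OF vmid] by simp
    also have "\<dots> \<le> 2 * (d n + 1 / Suc n) + 2 * (D + 1 / Suc n) - 4 * d n"
    proof -
      have "\<Phi> (c m) \<le> D + 1 / Suc n"
      proof -
        have "\<Phi> (c m) < d m + 1 / Suc m" by (rule c\<Phi>)
        moreover have "1 / real (Suc m) \<le> 1 / Suc n" using that by (simp add: frac_le)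
        ultimately show ?thesis using d_leD[of m] by linarith
      qed
      then show ?thesis using c\<Phi>[of n] d_le[OF vmid] by (rule aux_arith)
    qed
    also have "\<dots> = \<epsilon> n" by (simp add: \<epsilon>_def algebra_simps)
    finally show ?thesis .
  qed
  have eps0: "\<epsilon> \<longlonglongrightarrow> 0"
  proof -
    have "(\<lambda>n. 2 * (D - d n) + 4 * inverse (real (Suc n))) \<longlonglongrightarrow> 2 * (D - D) + 4 * 0"
      by (intro tendsto_intros dD LIMSEQ_inverse_real_of_nat)
    moreover have "\<epsilon> = (\<lambda>n. 2 * (D - d n) + 4 * inverse (real (Suc n)))"
      by (simp add: \<epsilon>_def divide_inverse fun_eq_iff)
    ultimately show ?thesis by simp
  qed
  have eps_anti: "\<epsilon> m \<le> \<epsilon> n" if "n \<le> m" for n m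
  proof -
    have "4 / real (Suc m) \<le> 4 / real (Suc n)" using that by (intro divide_left_mono) auto
    then show ?thesis using d_mono[OF that] by (simp add: \<epsilon>_def)
  qed
  define L where "L k = (LEAST n. \<epsilon> n \<le> (1/4)^k)" for k :: nat
  have exn: "\<exists>n. \<epsilon> n \<le> (1/4)^k" for k :: nat
  proof -
    have "eventually (\<lambda>n. \<epsilon> n < (1/4)^k) sequentially"
      using order_tendstoD(2)[OF eps0, of "(1/4)^k"] by simp
    then obtain n where "\<epsilon> n < (1/4)^k" by (auto simp: eventually_sequentially)
    then show ?thesis by (auto intro: less_imp_le)
  qed
  have L1: "\<epsilon> (L k) \<le> (1/4)^k" for k unfolding L_def by (rule LeastI_ex[OF exn])
  have Lmono: "L k \<le> L (Suc k)" for k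
  proof -
    have "\<epsilon> (L (Suc k)) \<le> (1/4)^k"
      using L1[of "Suc k"] by (rule order_trans) (simp add: power_decreasing)
    then show ?thesis unfolding L_def[of k] by (rule Least_le)
  qed
  define \<sigma> where "\<sigma> k = L k + k" for k
  have \<sigma>eps: "\<epsilon> (\<sigma> k) \<le> (1/4)^k" for k
    using eps_anti[of "L k" "\<sigma> k"] L1[of k] by (simp add: \<sigma>_def)
  have \<sigma>mono: "\<sigma> k \<le> \<sigma> (Suc k)" for k using Lmono[of k] by (simp add: \<sigma>_def)
  have \<sigma>k: "k \<le> \<sigma> k" for k by (simp add: \<sigma>_def)
  define \<Delta> where "\<Delta> k t = cmb (c (\<sigma> k)) t - cmb (c (\<sigma> (Suc k))) t" for k t
  have \<Delta>m[measurable]: "\<Delta> k \<in> borel_measurable lborel" for k unfolding \<Delta>_def by measurable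
  have \<Delta>b: "norm (\<Delta> k t) \<le> 2 * B" for k t
    unfolding \<Delta>_def using cmbb[OF cv[of "\<sigma> k"], of t] cmbb[OF cv[of "\<sigma> (Suc k)"], of t]
    by (smt (verit) norm_triangle_ineq4)
  have \<Delta>z: "\<Delta> k t = 0" if "t \<notin> S" for k t unfolding \<Delta>_def using cmbz[OF that] by simp
  have I2: "integral\<^sup>L lborel (\<lambda>t. (norm (\<Delta> k t))\<^sup>2) \<le> (1/4)^k" for k
    unfolding \<Delta>_def using cauchy[OF \<sigma>mono[of k]] \<sigma>eps[of k] by linarith
  have int1: "integrable lborel (\<lambda>t. norm (\<Delta> k t))" for k
    by (rule intg[where C="2*B"]) (use \<Delta>b \<Delta>z in auto)
  have int2: "integrable lborel (\<lambda>t. (norm (\<Delta> k t))\<^sup>2)" for k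
  proof -
    have sq: "\<bar>(norm (\<Delta> k t))\<^sup>2\<bar> \<le> (2*B)^2" for t using power_mono[OF \<Delta>b[of k t], of 2] by (simp add: power_mult_distrib)
    show ?thesis by (rule intg[where C="(2*B)^2"]) (use sq \<Delta>z in auto)
  qed
  have \<mu>0: "0 \<le> \<mu>" by (simp add: \<mu>_def)
  have I1: "integral\<^sup>L lborel (\<lambda>t. norm (\<Delta> k t)) \<le> (\<mu> + 1) / 2 * (1/2)^k" for k
  proof -
    define r :: real where "r = (1/2)^k"
    have r0: "0 < r" by (simp add: r_def)
    have pt: "norm (\<Delta> k t) \<le> r / 2 * indicator S t + (norm (\<Delta> k t))\<^sup>2 / (2 * r)" for t
    proof (cases "t \<in> S")
      case True
      define y where "y = norm (\<Delta> k t)"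
      have "0 \<le> (r - y)^2" by simp
      then have "2 * r * y \<le> r^2 + y^2" by (simp add: power2_diff algebra_simps)
      then have "y \<le> r / 2 + y^2 / (2 * r)" using r0 by (simp add: field_simps power2_eq_square)
      then show ?thesis using True by (simp add: y_def)
    next
      case False then show ?thesis using \<Delta>z[OF False] by simp
    qed
    have "integral\<^sup>L lborel (\<lambda>t. norm (\<Delta> k t)) \<le> integral\<^sup>L lborel (\<lambda>t. r / 2 * indicator S t + (norm (\<Delta> k t))\<^sup>2 / (2 * r))"
      apply (rule integral_mono[OF int1 _ pt])
      using S int2 by (intro Bochner_Integration.integrable_add integrable_mult_right integrable_divide_zero integrable_real_indicator) (auto simp: less_top)
    also have "\<dots> = r / 2 * \<mu> + integral\<^sup>L lborel (\<lambda>t. (norm (\<Delta> k t))\<^sup>2) / (2 * r)"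
      using S int2 by (subst Bochner_Integration.integral_add) (auto simp: less_top \<mu>_def)
    also have "\<dots> \<le> r / 2 * \<mu> + (1/4)^k / (2 * r)"
      using I2[of k] r0 by (intro add_left_mono divide_right_mono) auto
    also have "(1/4::real)^k = r * r" by (simp add: r_def power_mult_distrib[symmetric])
    also have "r / 2 * \<mu> + r * r / (2 * r) = (\<mu> + 1) / 2 * (1/2)^k" using r0 by (simp add: r_def field_simps)
    finally show ?thesis .
  qed
  have sumI: "summable (\<lambda>k. (\<mu> + 1) / 2 * (1/2::real)^k)"
    by (intro summable_mult summable_geometric) simp
  have "(\<integral>\<^sup>+ t. (\<Sum>k. ennreal (norm (\<Delta> k t))) \<partial>lborel) = (\<Sum>k. \<integral>\<^sup>+ t. ennreal (norm (\<Delta> k t)) \<partial>lborel)"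
    by (rule nn_integral_suminf) measurable
  also have "\<dots> = (\<Sum>k. ennreal (integral\<^sup>L lborel (\<lambda>t. norm (\<Delta> k t))))"
    using int1 by (subst nn_integral_eq_integral) auto
  also have "\<dots> \<le> (\<Sum>k. ennreal ((\<mu> + 1) / 2 * (1/2)^k))"
    by (intro suminf_le summableI ennreal_leI I1)
  finally have le: "(\<integral>\<^sup>+ t. (\<Sum>k. ennreal (norm (\<Delta> k t))) \<partial>lborel) \<le> (\<Sum>k. ennreal ((\<mu> + 1) / 2 * (1/2)^k))" .
  have ne: "(\<Sum>k. ennreal ((\<mu> + 1) / 2 * (1/2::real)^k)) \<noteq> top"
    by (rule ennreal_suminf_neq_top[OF sumI]) (use \<mu>0 in simp)
  have fin: "(\<integral>\<^sup>+ t. (\<Sum>k. ennreal (norm (\<Delta> k t))) \<partial>lborel) \<noteq> \<infinity>"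
    using le ne by (metis infinity_ennreal_def neq_top_trans)
  have "AE t in lborel. (\<Sum>k. ennreal (norm (\<Delta> k t))) \<noteq> \<infinity>"
    by (rule nn_integral_PInf_AE[OF _ fin]) measurable
  then have AEc: "AE t in lborel. convergent (\<lambda>k. cmb (c (\<sigma> k)) t)"
  proof eventually_elim
    case (elim t)
    have "summable (\<lambda>k. norm (\<Delta> k t))"
      using elim by (intro summable_suminf_not_top) auto
    then have "summable (\<lambda>k. \<Delta> k t)" by (rule summable_norm_cancel)
    then have "(\<lambda>K. \<Sum>k<K. \<Delta> k t) \<longlonglongrightarrow> (\<Sum>k. \<Delta> k t)" by (rule summable_LIMSEQ)
    then have "(\<lambda>K. cmb (c (\<sigma> 0)) t - (\<Sum>k<K. \<Delta> k t)) \<longlonglongrightarrow> cmb (c (\<sigma> 0)) t - (\<Sum>k. \<Delta> k t)"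
      by (intro tendsto_intros)
    moreover have "cmb (c (\<sigma> 0)) t - (\<Sum>k<K. \<Delta> k t) = cmb (c (\<sigma> K)) t" for K
      unfolding \<Delta>_def by (subst sum_lessThan_telescope') simp
    ultimately have "(\<lambda>K. cmb (c (\<sigma> K)) t) \<longlonglongrightarrow> cmb (c (\<sigma> 0)) t - (\<Sum>k. \<Delta> k t)" by simp
    then show ?case unfolding convergent_def by blast
  qed
  show ?thesis
  proof (intro exI conjI allI impI)
    show "0 \<le> snd (c (\<sigma> k)) j" for k j using cv[of "\<sigma> k"] by (simp add: valid_def)
    show "(\<Sum>j<fst (c (\<sigma> k)). snd (c (\<sigma> k)) j) = 1" for k using cv[of "\<sigma> k"] by (simp add: valid_def)
    show "snd (c (\<sigma> k)) j = 0" if "j < k" for k j using cv[of "\<sigma> k"] that \<sigma>k[of k] by (simp add: valid_def)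
    show "AE t in lborel. convergent (\<lambda>k. \<Sum>j<fst (c (\<sigma> k)). snd (c (\<sigma> k)) j *\<^sub>R x j t)"
      using AEc by (simp add: cmb_def)
  qed
qed

lemma tail_conv:
  fixes X :: "nat \<Rightarrow> real"
  assumes X: "X \<longlonglongrightarrow> L" and w0: "\<And>k j. 0 \<le> w k j" and w1: "\<And>k. (\<Sum>j<N k. w k j) = 1"
    and wz: "\<And>k j. j < k \<Longrightarrow> w k j = 0"
  shows "(\<lambda>k. \<Sum>j<N k. w k j * X j) \<longlonglongrightarrow> L"
proof (rule LIMSEQ_I)
  fix r :: real assume r: "0 < r"
  obtain n0 where n0: "\<And>n. n \<ge> n0 \<Longrightarrow> norm (X n - L) < r/2"
    using LIMSEQ_D[OF X, of "r/2"] r by auto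
  show "\<exists>no. \<forall>n\<ge>no. norm ((\<Sum>j<N n. w n j * X j) - L) < r"
  proof (intro exI allI impI)
    fix k assume k: "n0 \<le> k"
    have "(\<Sum>j<N k. w k j * X j) - L = (\<Sum>j<N k. w k j * (X j - L))"
      using w1[of k] by (simp add: right_diff_distrib sum_subtractf sum_distrib_right[symmetric])
    also have "\<bar>\<dots>\<bar> \<le> (\<Sum>j<N k. \<bar>w k j * (X j - L)\<bar>)" by (rule sum_abs)
    also have "\<dots> \<le> (\<Sum>j<N k. w k j * (r/2))"
    proof (rule sum_mono)
      fix j assume "j \<in> {..<N k}"
      show "\<bar>w k j * (X j - L)\<bar> \<le> w k j * (r / 2)"
      proof (cases "j < k")
        case True then show ?thesis using wz by simp
      next
        case False
        then have "\<bar>X j - L\<bar> < r/2" using n0[of j] k by simp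
        then have "w k j * \<bar>X j - L\<bar> \<le> w k j * (r/2)" using w0[of k j] by (intro mult_left_mono) auto
        then show ?thesis using w0[of k j] by (simp add: abs_mult)
      qed
    qed
    also have "\<dots> = (\<Sum>j<N k. w k j) * (r/2)" by (rule sum_distrib_right[symmetric])
    also have "\<dots> = r/2" using w1[of k] by simp
    finally show "norm ((\<Sum>j<N k. w k j * X j) - L) < r" using r by simp
  qed
qed

lemma convex_sq_sum:
  fixes a w :: "nat \<Rightarrow> real"
  assumes w0: "\<And>j. 0 \<le> w j" and w1: "(\<Sum>j<N. w j) = 1"
  shows "(\<Sum>j<N. w j * a j)^2 \<le> (\<Sum>j<N. w j * (a j)^2)"
proof -
  define m where "m = (\<Sum>j<N. w j * a j)"
  have "0 \<le> (\<Sum>j<N. w j * (a j - m)^2)" using w0 by (intro sum_nonneg) auto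
  also have "\<dots> = (\<Sum>j<N. w j * (a j)^2) - 2 * m * (\<Sum>j<N. w j * a j) + m^2 * (\<Sum>j<N. w j)"
    by (simp add: power2_diff algebra_simps sum.distrib sum_subtractf sum_distrib_left sum_distrib_right)
  also have "\<dots> = (\<Sum>j<N. w j * (a j)^2) - m^2" using w1 by (simp add: m_def power2_eq_square)
  finally show ?thesis by (simp add: m_def)
qed

lemma convex_norm_sq:
  fixes x :: "nat \<Rightarrow> 'a::real_normed_vector" and w :: "nat \<Rightarrow> real"
  assumes w0: "\<And>j. 0 \<le> w j" and w1: "(\<Sum>j<N. w j) = 1"
  shows "(norm (\<Sum>j<N. w j *\<^sub>R x j))^2 \<le> (\<Sum>j<N. w j * (norm (x j))^2)"
proof -
  have "norm (\<Sum>j<N. w j *\<^sub>R x j) \<le> (\<Sum>j<N. norm (w j *\<^sub>R x j))" by (rule norm_sum)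
  also have "\<dots> = (\<Sum>j<N. w j * norm (x j))" using w0 by simp
  finally have "(norm (\<Sum>j<N. w j *\<^sub>R x j))^2 \<le> (\<Sum>j<N. w j * norm (x j))^2"
    by (intro power_mono) auto
  also have "\<dots> \<le> (\<Sum>j<N. w j * (norm (x j))^2)" by (rule convex_sq_sum[OF w0 w1])
  finally show ?thesis .
qed

lemma rhs_m_swap: "rhs_m \<beta> \<delta> K e x y = rhs_f \<beta> \<delta> K e y x"
  by (simp add: rhs_m_def rhs_f_def Lfac_def algebra_simps)

lemma rhs_f_factor: "rhs_f \<beta> \<delta> K e x y = x * (1/2 * y * \<beta> * Lfac K x y - \<delta> - e)"
  by (simp add: rhs_f_def algebra_simps)

lemma Lfac_bound:
  assumes "0 < K" "0 \<le> a" "a \<le> M" "0 \<le> b" "b \<le> M"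
  shows "\<bar>Lfac K a b\<bar> \<le> 1 + 2 * M / K"
proof -
  have "0 \<le> (a + b) / K" using assms by simp
  moreover have "(a + b) / K \<le> 2 * M / K" using assms by (intro divide_right_mono) auto
  ultimately show ?thesis unfolding Lfac_def by linarith
qed

lemma rhs_f_bound:
  assumes K: "0 < K" and "0 \<le> \<beta>" "0 \<le> \<delta>" "0 \<le> a" "a \<le> M" "0 \<le> b" "b \<le> M" "0 \<le> e" "e \<le> 1"
  shows "\<bar>rhs_f \<beta> \<delta> K e a b\<bar> \<le> \<beta> * M * M * (1 + 2 * M / K) + \<delta> * M + M"
proof -
  have ab: "a * b \<le> M * M" using assms by (intro mult_mono) auto
  have L: "\<bar>Lfac K a b\<bar> \<le> 1 + 2 * M / K" using Lfac_bound assms by blast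
  have "\<bar>1/2 * a * b * \<beta> * Lfac K a b\<bar> = 1/2 * ((a * b) * \<beta> * \<bar>Lfac K a b\<bar>)"
    using assms by (simp add: abs_mult)
  also have "\<dots> \<le> (a * b) * \<beta> * \<bar>Lfac K a b\<bar>"
    using assms by (simp add: mult_nonneg_nonneg)
  also have "\<dots> \<le> (M * M) * \<beta> * (1 + 2 * M / K)"
    using assms ab L by (intro mult_mono) (auto intro: mult_nonneg_nonneg)
  finally have t1: "\<bar>1/2 * a * b * \<beta> * Lfac K a b\<bar> \<le> \<beta> * M * M * (1 + 2 * M / K)" by (simp add: algebra_simps)
  have t2: "\<bar>\<delta> * a\<bar> \<le> \<delta> * M" using assms by (simp add: abs_mult mult_left_mono)
  have t3: "\<bar>e * a\<bar> \<le> M" using assms mult_mono[of e 1 a M] by (simp add: abs_mult)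
  show ?thesis unfolding rhs_f_def using t1 t2 t3 by linarith
qed

lemma prod_lip:
  fixes a b a2 b2 M :: real
  assumes "0 \<le> a" "a \<le> M" "0 \<le> b" "b \<le> M" "0 \<le> a2" "a2 \<le> M" "0 \<le> b2" "b2 \<le> M"
  shows "\<bar>a * b - a2 * b2\<bar> \<le> M * \<bar>a - a2\<bar> + M * \<bar>b - b2\<bar>"
proof -
  have "a * b - a2 * b2 = a * (b - b2) + b2 * (a - a2)" by (simp add: algebra_simps)
  then have "\<bar>a * b - a2 * b2\<bar> \<le> \<bar>a\<bar> * \<bar>b - b2\<bar> + \<bar>b2\<bar> * \<bar>a - a2\<bar>"
    by (metis abs_mult abs_triangle_ineq)
  also have "\<dots> \<le> M * \<bar>b - b2\<bar> + M * \<bar>a - a2\<bar>"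
    using assms by (intro add_mono mult_right_mono) auto
  finally show ?thesis by simp
qed

lemma trip_lip:
  fixes a b a2 b2 M :: real
  assumes "0 \<le> a" "a \<le> M" "0 \<le> b" "b \<le> M" "0 \<le> a2" "a2 \<le> M" "0 \<le> b2" "b2 \<le> M"
  shows "\<bar>a * a * b - a2 * a2 * b2\<bar> \<le> 2 * (M * M) * \<bar>a - a2\<bar> + (M * M) * \<bar>b - b2\<bar>"
proof -
  have "a * a * b - a2 * a2 * b2 = a * (a * b - a2 * b2) + (a2 * b2) * (a - a2)" by (simp add: algebra_simps)
  then have "\<bar>a * a * b - a2 * a2 * b2\<bar> \<le> \<bar>a\<bar> * \<bar>a * b - a2 * b2\<bar> + \<bar>a2 * b2\<bar> * \<bar>a - a2\<bar>"
    by (metis abs_mult abs_triangle_ineq)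
  also have "\<dots> \<le> M * (M * \<bar>a - a2\<bar> + M * \<bar>b - b2\<bar>) + (M * M) * \<bar>a - a2\<bar>"
  proof (intro add_mono mult_mono)
    show "\<bar>a * b - a2 * b2\<bar> \<le> M * \<bar>a - a2\<bar> + M * \<bar>b - b2\<bar>" using prod_lip assms by blast
    show "\<bar>a2 * b2\<bar> \<le> M * M" using assms by (simp add: abs_mult mult_mono)
  qed (use assms in auto)
  finally show ?thesis by (simp add: algebra_simps)
qed

lemma rhs_f_lip:
  fixes a b a2 b2 M :: real
  assumes K: "0 < K" and be: "0 \<le> \<beta>" "0 \<le> \<delta>"
    and box: "0 \<le> a" "a \<le> M" "0 \<le> b" "b \<le> M" "0 \<le> a2" "a2 \<le> M" "0 \<le> b2" "b2 \<le> M"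
  shows "\<bar>rhs_f \<beta> \<delta> K 0 a b - rhs_f \<beta> \<delta> K 0 a2 b2\<bar>
    \<le> (\<beta> * M + 2 * \<beta> * (M * M) / K + \<delta>) * (\<bar>a - a2\<bar> + \<bar>b - b2\<bar>)"
proof -
  define X1 where "X1 = a * b - a2 * b2"
  define X2 where "X2 = a * a * b - a2 * a2 * b2"
  define X3 where "X3 = b * b * a - b2 * b2 * a2"
  define p where "p = \<beta> / 2"
  define q where "q = \<beta> / (2 * K)"
  have p0: "0 \<le> p" and q0: "0 \<le> q" using be K by (auto simp: p_def q_def)
  have eq: "rhs_f \<beta> \<delta> K 0 a b - rhs_f \<beta> \<delta> K 0 a2 b2 = p * X1 - q * X2 - q * X3 - \<delta> * (a - a2)"
    using K by (simp add: rhs_f_def Lfac_def X1_def X2_def X3_def p_def q_def field_simps)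
  have "\<bar>p * X1 - q * X2 - q * X3 - \<delta> * (a - a2)\<bar> \<le> p * \<bar>X1\<bar> + q * \<bar>X2\<bar> + q * \<bar>X3\<bar> + \<delta> * \<bar>a - a2\<bar>"
  proof -
    have abs4: "\<bar>A - B - C - D\<bar> \<le> \<bar>A\<bar> + \<bar>B\<bar> + \<bar>C\<bar> + \<bar>D\<bar>" for A B C D :: real by arith
    have "\<bar>p * X1\<bar> = p * \<bar>X1\<bar>" "\<bar>q * X2\<bar> = q * \<bar>X2\<bar>" "\<bar>q * X3\<bar> = q * \<bar>X3\<bar>" "\<bar>\<delta> * (a - a2)\<bar> = \<delta> * \<bar>a - a2\<bar>"
      using p0 q0 be by (simp_all add: abs_mult)
    then show ?thesis using abs4[of "p * X1" "q * X2" "q * X3" "\<delta> * (a - a2)"] by simp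
  qed
  also have "\<dots> \<le> p * (M * \<bar>a - a2\<bar> + M * \<bar>b - b2\<bar>) + q * (2 * (M * M) * \<bar>a - a2\<bar> + (M * M) * \<bar>b - b2\<bar>)
       + q * (2 * (M * M) * \<bar>b - b2\<bar> + (M * M) * \<bar>a - a2\<bar>) + \<delta> * \<bar>a - a2\<bar>"
    unfolding X1_def X2_def X3_def
    using prod_lip[OF box] trip_lip[OF box] trip_lip[of b M a b2 a2] box p0 q0
    by (intro add_mono mult_left_mono order_refl) auto
  also have "\<dots> = (p * M + 3 * q * (M * M) + \<delta>) * \<bar>a - a2\<bar> + (p * M + 3 * q * (M * M)) * \<bar>b - b2\<bar>"
    by (simp add: algebra_simps)
  also have "\<dots> \<le> (\<beta> * M + 2 * \<beta> * (M * M) / K + \<delta>) * \<bar>a - a2\<bar> + (\<beta> * M + 2 * \<beta> * (M * M) / K + \<delta>) * \<bar>b - b2\<bar>"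
  proof -
    have M0: "0 \<le> M" using box by simp
    have c1: "p * M + 3 * q * (M * M) \<le> \<beta> * M + 2 * \<beta> * (M * M) / K"
    proof -
      have "p * M \<le> \<beta> * M" using be M0 by (simp add: p_def mult_right_mono)
      moreover have "3 * q * (M * M) = 3/2 * (\<beta> * (M * M) / K)" using K by (simp add: q_def field_simps)
      moreover have "0 \<le> \<beta> * (M * M) / K" using be K by simp
      ultimately show ?thesis by linarith
    qed
    have "(p * M + 3 * q * (M * M) + \<delta>) * \<bar>a - a2\<bar> \<le> (\<beta> * M + 2 * \<beta> * (M * M) / K + \<delta>) * \<bar>a - a2\<bar>"
      by (rule mult_right_mono) (use c1 in auto)
    moreover have "(p * M + 3 * q * (M * M)) * \<bar>b - b2\<bar> \<le> (\<beta> * M + 2 * \<beta> * (M * M) / K + \<delta>) * \<bar>b - b2\<bar>"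
      by (rule mult_right_mono) (use c1 be in auto)
    ultimately show ?thesis by (rule add_mono)
  qed
  finally have fin: "\<bar>p * X1 - q * X2 - q * X3 - \<delta> * (a - a2)\<bar> \<le> (\<beta> * M + 2 * \<beta> * (M * M) / K + \<delta>) * \<bar>a - a2\<bar> + (\<beta> * M + 2 * \<beta> * (M * M) / K + \<delta>) * \<bar>b - b2\<bar>" .
  show ?thesis unfolding eq using fin by (simp only: distrib_left)
qed

definition clip :: "real \<Rightarrow> real \<Rightarrow> real" where "clip M z = max 0 (min M z)"

lemma clip_range: "0 \<le> M \<Longrightarrow> 0 \<le> clip M z \<and> clip M z \<le> M" by (auto simp: clip_def)
lemma clip_id: "0 \<le> z \<Longrightarrow> z \<le> M \<Longrightarrow> clip M z = z" by (auto simp: clip_def)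
lemma clip_lip: "\<bar>clip M z - clip M z2\<bar> \<le> \<bar>z - z2\<bar>" by (auto simp: clip_def)
lemma clip_cont: "continuous_on UNIV (clip M)" unfolding clip_def by (intro continuous_intros)

lemma cont_F:
  assumes "0 < K" "continuous_on UNIV u" "continuous_on UNIV v"
  shows "continuous_on UNIV (\<lambda>s. rhs_f \<beta> \<delta> K e (clip M (u s)) (clip M (v s)))"
  using assms unfolding rhs_f_def Lfac_def clip_def by (intro continuous_intros) auto

lemma cont_rhs:
  assumes "0 < K" "continuous_on UNIV u" "continuous_on UNIV v"
  shows "continuous_on UNIV (\<lambda>s. rhs_f \<beta> \<delta> K e (u s) (v s))"
  using assms unfolding rhs_f_def Lfac_def by (intro continuous_intros) auto

lemma tendsto_F:
  assumes "0 < K" "a \<longlonglongrightarrow> x" "b \<longlonglongrightarrow> y"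
  shows "(\<lambda>k. rhs_f \<beta> \<delta> K e (clip M (a k)) (clip M (b k))) \<longlonglongrightarrow> rhs_f \<beta> \<delta> K e (clip M x) (clip M y)"
  using assms unfolding rhs_f_def Lfac_def clip_def by (intro tendsto_intros) auto

lemma sumF_nonpos:
  assumes "0 \<le> x" "0 \<le> y" "K \<le> x + y" "0 < K" "0 \<le> \<beta>" "0 \<le> \<delta>"
  shows "rhs_f \<beta> \<delta> K 0 x y + rhs_f \<beta> \<delta> K 0 y x \<le> 0"
proof -
  have eq: "rhs_f \<beta> \<delta> K 0 x y + rhs_f \<beta> \<delta> K 0 y x = (x * y * \<beta>) * (1 - (x + y) / K) - \<delta> * (x + y)"
    by (simp add: rhs_f_def Lfac_def algebra_simps)
  have "1 \<le> (x + y) / K" using assms by (simp add: field_simps)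
  then have "(x * y * \<beta>) * (1 - (x + y) / K) \<le> 0"
    using assms by (intro mult_nonneg_nonpos) auto
  moreover have "0 \<le> \<delta> * (x + y)" using assms by simp
  ultimately show ?thesis unfolding eq by linarith
qed

lemma Prim_uminus: "Prim (\<lambda>s. - h s) t = - Prim h t"
  unfolding Prim_def set_lebesgue_integral_def by simp

lemma Prim_add:
  fixes g h :: "real \<Rightarrow> real"
  assumes "g \<in> borel_measurable lborel" "h \<in> borel_measurable lborel" "\<And>x. \<bar>g x\<bar> \<le> B" "\<And>x. \<bar>h x\<bar> \<le> B"
  shows "Prim (\<lambda>s. g s + h s) t = Prim g t + Prim h t"
  unfolding Prim_def
  by (rule set_integral_add(2)) (use sint_bdd assms in blast)+

lemma exists_state0:
  fixes \<beta> \<delta> K T f0 m0 :: real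
  assumes pos: "0 < \<beta>" "0 < \<delta>" "0 < K" "0 < T" and f0: "0 \<le> f0" and m0: "0 \<le> m0"
  shows "\<exists>f m. is_state \<beta> \<delta> K T f0 m0 (\<lambda>_. 0) (\<lambda>_. 0) f m"
proof -
  define M where "M = max (f0 + m0) K"
  have M0: "0 \<le> M" and MK: "K \<le> M" and Mf: "f0 + m0 \<le> M" using pos f0 m0 by (auto simp: M_def)
  define F1 where "F1 x y = rhs_f \<beta> \<delta> K 0 (clip M x) (clip M y)" for x y
  define F2 where "F2 x y = rhs_f \<beta> \<delta> K 0 (clip M y) (clip M x)" for x y
  define Bd where "Bd = \<beta> * M * M * (1 + 2 * M / K) + \<delta> * M + M"
  define Lc where "Lc = \<beta> * M + 2 * \<beta> * (M * M) / K + \<delta>"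
  have Lc0: "0 \<le> Lc" using pos M0 by (simp add: Lc_def)
  have F1b: "\<bar>F1 x y\<bar> \<le> Bd" for x y
    unfolding F1_def Bd_def using clip_range[OF M0] pos by (intro rhs_f_bound) auto
  have F2b: "\<bar>F2 x y\<bar> \<le> Bd" for x y
    unfolding F2_def Bd_def using clip_range[OF M0] pos by (intro rhs_f_bound) auto
  have Bd0: "0 \<le> Bd" using F1b[of 0 0] by simp
  have F1l: "\<bar>F1 x y - F1 x2 y2\<bar> \<le> Lc * (\<bar>x - x2\<bar> + \<bar>y - y2\<bar>)" for x y x2 y2
  proof -
    have "\<bar>F1 x y - F1 x2 y2\<bar> \<le> Lc * (\<bar>clip M x - clip M x2\<bar> + \<bar>clip M y - clip M y2\<bar>)"
      unfolding F1_def Lc_def using clip_range[OF M0] pos by (intro rhs_f_lip) auto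
    also have "\<dots> \<le> Lc * (\<bar>x - x2\<bar> + \<bar>y - y2\<bar>)"
      using Lc0 clip_lip by (intro mult_left_mono add_mono) auto
    finally show ?thesis .
  qed
  have F2l: "\<bar>F2 x y - F2 x2 y2\<bar> \<le> Lc * (\<bar>x - x2\<bar> + \<bar>y - y2\<bar>)" for x y x2 y2
  proof -
    have "\<bar>F2 x y - F2 x2 y2\<bar> \<le> Lc * (\<bar>clip M y - clip M y2\<bar> + \<bar>clip M x - clip M x2\<bar>)"
      unfolding F2_def Lc_def using clip_range[OF M0] pos by (intro rhs_f_lip) auto
    also have "\<dots> \<le> Lc * (\<bar>x - x2\<bar> + \<bar>y - y2\<bar>)"
      using Lc0 clip_lip by (intro mult_left_mono) (simp add: add.commute add_mono)
    finally show ?thesis .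
  qed
  have F1c: "continuous_on UNIV (\<lambda>s. F1 (u s) (v s))" if "continuous_on UNIV u" "continuous_on UNIV v" for u v
    unfolding F1_def using cont_F pos that by blast
  have F2c: "continuous_on UNIV (\<lambda>s. F2 (u s) (v s))" if "continuous_on UNIV u" "continuous_on UNIV v" for u v
    unfolding F2_def using cont_F pos that by blast
  define pic where "pic = rec_nat ((\<lambda>t. f0), (\<lambda>t. m0))
     (\<lambda>k p. ((\<lambda>t. f0 + Prim (\<lambda>s. F1 (fst p s) (snd p s)) t), (\<lambda>t. m0 + Prim (\<lambda>s. F2 (fst p s) (snd p s)) t)))"
  define u where "u k = fst (pic k)" for k
  define v where "v k = snd (pic k)" for k
  have u0: "u 0 = (\<lambda>t. f0)" and v0: "v 0 = (\<lambda>t. m0)" by (simp_all add: u_def v_def pic_def)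
  have uS: "u (Suc k) t = f0 + Prim (\<lambda>s. F1 (u k s) (v k s)) t" for k t by (simp add: u_def v_def pic_def)
  have vS: "v (Suc k) t = m0 + Prim (\<lambda>s. F2 (u k s) (v k s)) t" for k t by (simp add: u_def v_def pic_def)
  have cont: "continuous_on UNIV (u k) \<and> continuous_on UNIV (v k)" for k
  proof (induction k)
    case 0 then show ?case by (simp add: u0 v0)
  next
    case (Suc k)
    have m1: "(\<lambda>s. F1 (u k s) (v k s)) \<in> borel_measurable lborel"
      using borel_measurable_continuous_onI[OF F1c[OF conjunct1[OF Suc.IH] conjunct2[OF Suc.IH]]] by simp
    have m2: "(\<lambda>s. F2 (u k s) (v k s)) \<in> borel_measurable lborel"
      using borel_measurable_continuous_onI[OF F2c[OF conjunct1[OF Suc.IH] conjunct2[OF Suc.IH]]] by simp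
    have "continuous_on UNIV (\<lambda>t. f0 + Prim (\<lambda>s. F1 (u k s) (v k s)) t)"
      using Prim_cont[OF m1 F1b] by (intro continuous_intros)
    moreover have "continuous_on UNIV (\<lambda>t. m0 + Prim (\<lambda>s. F2 (u k s) (v k s)) t)"
      using Prim_cont[OF m2 F2b] by (intro continuous_intros)
    ultimately show ?case unfolding uS[abs_def] vS[abs_def] by simp
  qed
  define g where "g k s = F1 (u k s) (v k s)" for k s
  define h where "h k s = F2 (u k s) (v k s)" for k s
  have gm[measurable]: "g k \<in> borel_measurable lborel" for k
    unfolding g_def using borel_measurable_continuous_onI[OF F1c[OF conjunct1[OF cont[of k]] conjunct2[OF cont[of k]]]] by simp
  have hm[measurable]: "h k \<in> borel_measurable lborel" for k
    unfolding h_def using borel_measurable_continuous_onI[OF F2c[OF conjunct1[OF cont[of k]] conjunct2[OF cont[of k]]]] by simp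
  have gb: "\<bar>g k s\<bar> \<le> Bd" for k s unfolding g_def by (rule F1b)
  have hb: "\<bar>h k s\<bar> \<le> Bd" for k s unfolding h_def by (rule F2b)
  define \<Lambda> where "\<Lambda> = 2 * Lc"
  define A where "A = 2 * Bd * T"
  have \<Lambda>0: "0 \<le> \<Lambda>" using Lc0 by (simp add: \<Lambda>_def)
  have A0: "0 \<le> A" using Bd0 pos by (simp add: A_def)
  have est: "\<forall>t\<in>{0..T}. \<bar>u (Suc k) t - u k t\<bar> + \<bar>v (Suc k) t - v k t\<bar> \<le> A * (\<Lambda> * t)^k / fact k" for k
  proof (induction k)
    case 0
    show ?case
    proof
      fix t assume t: "t \<in> {0..T}"
      have "\<bar>u (Suc 0) t - u 0 t\<bar> = \<bar>Prim (g 0) t - Prim (g 0) 0\<bar>" by (simp add: uS u0 v0 Prim_0 g_def[abs_def])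
      also have "\<dots> \<le> Bd * \<bar>t - 0\<bar>" by (rule Prim_lip[OF gm gb])
      finally have 1: "\<bar>u (Suc 0) t - u 0 t\<bar> \<le> Bd * T" using t Bd0 by (smt (verit) atLeastAtMost_iff mult_left_mono)
      have "\<bar>v (Suc 0) t - v 0 t\<bar> = \<bar>Prim (h 0) t - Prim (h 0) 0\<bar>" by (simp add: vS u0 v0 Prim_0 h_def[abs_def])
      also have "\<dots> \<le> Bd * \<bar>t - 0\<bar>" by (rule Prim_lip[OF hm hb])
      finally have 2: "\<bar>v (Suc 0) t - v 0 t\<bar> \<le> Bd * T" using t Bd0 by (smt (verit) atLeastAtMost_iff mult_left_mono)
      show "\<bar>u (Suc 0) t - u 0 t\<bar> + \<bar>v (Suc 0) t - v 0 t\<bar> \<le> A * (\<Lambda> * t) ^ 0 / fact 0"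
        using 1 2 by (simp add: A_def)
    qed
  next
    case (Suc k)
    show ?case
    proof
      fix t assume t: "t \<in> {0..T}"
      define c where "c = Lc * A * \<Lambda>^k / fact k"
      have c0: "0 \<le> c" using Lc0 A0 \<Lambda>0 by (simp add: c_def)
      have pm: "(\<lambda>s. c * s^k) \<in> borel_measurable lborel" by measurable
      have pb: "\<bar>c * s^k\<bar> \<le> c * T^k" if "s \<in> {0..t}" for s
        using that t c0 by (simp add: abs_mult) (intro mult_left_mono power_mono, auto)
      have dg: "\<bar>g (Suc k) s - g k s\<bar> \<le> c * s^k" if "s \<in> {0..t}" for s
      proof -
        have sT: "s \<in> {0..T}" using that t by auto
        have "\<bar>g (Suc k) s - g k s\<bar> \<le> Lc * (\<bar>u (Suc k) s - u k s\<bar> + \<bar>v (Suc k) s - v k s\<bar>)"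
          unfolding g_def by (rule F1l)
        also have "\<dots> \<le> Lc * (A * (\<Lambda> * s)^k / fact k)" using Suc.IH sT Lc0 by (intro mult_left_mono) auto
        also have "\<dots> = c * s^k" by (simp add: c_def power_mult_distrib)
        finally show ?thesis .
      qed
      have dh: "\<bar>h (Suc k) s - h k s\<bar> \<le> c * s^k" if "s \<in> {0..t}" for s
      proof -
        have sT: "s \<in> {0..T}" using that t by auto
        have "\<bar>h (Suc k) s - h k s\<bar> \<le> Lc * (\<bar>u (Suc k) s - u k s\<bar> + \<bar>v (Suc k) s - v k s\<bar>)"
          unfolding h_def by (rule F2l)
        also have "\<dots> \<le> Lc * (A * (\<Lambda> * s)^k / fact k)" using Suc.IH sT Lc0 by (intro mult_left_mono) auto
        also have "\<dots> = c * s^k" by (simp add: c_def power_mult_distrib)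
        finally show ?thesis .
      qed
      have dgb: "\<bar>g (Suc k) s - g k s\<bar> \<le> 2 * Bd" for s using gb[of "Suc k" s] gb[of k s] by linarith
      have dhb: "\<bar>h (Suc k) s - h k s\<bar> \<le> 2 * Bd" for s using hb[of "Suc k" s] hb[of k s] by linarith
      have Pc: "Prim (\<lambda>s. c * s^k) t = c * (t^(Suc k) / real (Suc k))"
        unfolding Prim_def using int_pow[of t k] t by simp
      have "\<bar>u (Suc (Suc k)) t - u (Suc k) t\<bar> = \<bar>Prim (\<lambda>s. g (Suc k) s - g k s) t\<bar>"
        using Prim_diff[of "g (Suc k)" "g k" Bd t, OF gm gm gb gb] by (simp add: uS g_def[abs_def])
      also have "\<dots> \<le> Prim (\<lambda>s. c * s^k) t"
        by (rule Prim_abs_le[OF _ pm dgb pb dg]) measurable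
      finally have 1: "\<bar>u (Suc (Suc k)) t - u (Suc k) t\<bar> \<le> c * (t^(Suc k) / real (Suc k))" using Pc by simp
      have "\<bar>v (Suc (Suc k)) t - v (Suc k) t\<bar> = \<bar>Prim (\<lambda>s. h (Suc k) s - h k s) t\<bar>"
        using Prim_diff[of "h (Suc k)" "h k" Bd t, OF hm hm hb hb] by (simp add: vS h_def[abs_def])
      also have "\<dots> \<le> Prim (\<lambda>s. c * s^k) t"
        by (rule Prim_abs_le[OF _ pm dhb pb dh]) measurable
      finally have 2: "\<bar>v (Suc (Suc k)) t - v (Suc k) t\<bar> \<le> c * (t^(Suc k) / real (Suc k))" using Pc by simp
      have "2 * (c * (t^(Suc k) / real (Suc k))) = A * (\<Lambda> * t)^(Suc k) / fact (Suc k)"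
        by (simp add: c_def \<Lambda>_def power_mult_distrib field_simps)
      then show "\<bar>u (Suc (Suc k)) t - u (Suc k) t\<bar> + \<bar>v (Suc (Suc k)) t - v (Suc k) t\<bar> \<le> A * (\<Lambda> * t)^(Suc k) / fact (Suc k)"
        using 1 2 by linarith
    qed
  qed
  have sumg: "summable (\<lambda>k. A * (\<Lambda> * T)^k / fact k)"
    using summable_mult[OF summable_exp[of "\<Lambda> * T"], of A] by (simp add: field_simps)
  have conv_gen: "convergent (\<lambda>k. w k t)"
    if wd: "\<And>k. \<bar>w (Suc k) t - w k t\<bar> \<le> A * (\<Lambda> * T)^k / fact k" for w :: "nat \<Rightarrow> real \<Rightarrow> real" and t
  proof -
    have "summable (\<lambda>k. norm (w (Suc k) t - w k t))"
      by (rule summable_comparison_test'[OF sumg]) (use wd in simp)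
    then have "summable (\<lambda>k. w (Suc k) t - w k t)" by (rule summable_norm_cancel)
    then have "(\<lambda>K. \<Sum>k<K. w (Suc k) t - w k t) \<longlonglongrightarrow> (\<Sum>k. w (Suc k) t - w k t)" by (rule summable_LIMSEQ)
    then have "(\<lambda>K. w 0 t + (\<Sum>k<K. w (Suc k) t - w k t)) \<longlonglongrightarrow> w 0 t + (\<Sum>k. w (Suc k) t - w k t)"
      by (intro tendsto_intros)
    moreover have "w 0 t + (\<Sum>k<K. w (Suc k) t - w k t) = w K t" for K
      by (subst sum_lessThan_telescope) simp
    ultimately show ?thesis unfolding convergent_def by auto
  qed
  have powT: "(\<Lambda> * t)^k \<le> (\<Lambda> * T)^k" if "t \<in> {0..T}" for t k
    using that \<Lambda>0 by (intro power_mono mult_left_mono) auto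
  have du: "\<bar>u (Suc k) t - u k t\<bar> \<le> A * (\<Lambda> * T)^k / fact k" if "t \<in> {0..T}" for k t
  proof -
    have "\<bar>u (Suc k) t - u k t\<bar> \<le> A * (\<Lambda> * t)^k / fact k" using est[of k] that by fastforce
    also have "\<dots> \<le> A * (\<Lambda> * T)^k / fact k" using powT[OF that] A0
      by (intro divide_right_mono mult_left_mono) auto
    finally show ?thesis .
  qed
  have dv: "\<bar>v (Suc k) t - v k t\<bar> \<le> A * (\<Lambda> * T)^k / fact k" if "t \<in> {0..T}" for k t
  proof -
    have "\<bar>v (Suc k) t - v k t\<bar> \<le> A * (\<Lambda> * t)^k / fact k" using est[of k] that by fastforce
    also have "\<dots> \<le> A * (\<Lambda> * T)^k / fact k" using powT[OF that] A0
      by (intro divide_right_mono mult_left_mono) auto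
    finally show ?thesis .
  qed
  define cl where "cl t = max 0 (min T t)" for t
  have clT: "cl t \<in> {0..T}" for t using pos by (auto simp: cl_def)
  have clid: "t \<in> {0..T} \<Longrightarrow> cl t = t" for t by (auto simp: cl_def)
  have cllip: "\<bar>cl x - cl y\<bar> \<le> \<bar>x - y\<bar>" for x y by (auto simp: cl_def)
  define U where "U t = lim (\<lambda>k. u k (cl t))" for t
  define V where "V t = lim (\<lambda>k. v k (cl t))" for t
  have Ul: "(\<lambda>k. u k (cl t)) \<longlonglongrightarrow> U t" for t
    unfolding U_def using conv_gen[of u "cl t"] du clT by (simp add: convergent_LIMSEQ_iff)
  have Vl: "(\<lambda>k. v k (cl t)) \<longlonglongrightarrow> V t" for t
    unfolding V_def using conv_gen[of v "cl t"] dv clT by (simp add: convergent_LIMSEQ_iff)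
  have ulip: "\<bar>u k x - u k y\<bar> \<le> Bd * \<bar>x - y\<bar>" for k x y
  proof (cases k)
    case 0 then show ?thesis using Bd0 by (simp add: u0)
  next
    case (Suc j)
    show ?thesis using Prim_lip[OF gm gb, of j x y] by (simp add: Suc uS g_def[abs_def])
  qed
  have vlip: "\<bar>v k x - v k y\<bar> \<le> Bd * \<bar>x - y\<bar>" for k x y
  proof (cases k)
    case 0 then show ?thesis using Bd0 by (simp add: v0)
  next
    case (Suc j)
    show ?thesis using Prim_lip[OF hm hb, of j x y] by (simp add: Suc vS h_def[abs_def])
  qed
  have Ulip: "\<bar>U x - U y\<bar> \<le> Bd * \<bar>x - y\<bar>" for x y
  proof -
    have "(\<lambda>k. \<bar>u k (cl x) - u k (cl y)\<bar>) \<longlonglongrightarrow> \<bar>U x - U y\<bar>" by (intro tendsto_intros Ul)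
    moreover have "\<bar>u k (cl x) - u k (cl y)\<bar> \<le> Bd * \<bar>x - y\<bar>" for k
      using ulip[of k "cl x" "cl y"] cllip[of x y] Bd0 by (meson mult_left_mono order_trans)
    ultimately show ?thesis by (intro LIMSEQ_le_const2) auto
  qed
  have Vlip: "\<bar>V x - V y\<bar> \<le> Bd * \<bar>x - y\<bar>" for x y
  proof -
    have "(\<lambda>k. \<bar>v k (cl x) - v k (cl y)\<bar>) \<longlonglongrightarrow> \<bar>V x - V y\<bar>" by (intro tendsto_intros Vl)
    moreover have "\<bar>v k (cl x) - v k (cl y)\<bar> \<le> Bd * \<bar>x - y\<bar>" for k
      using vlip[of k "cl x" "cl y"] cllip[of x y] Bd0 by (meson mult_left_mono order_trans)
    ultimately show ?thesis by (intro LIMSEQ_le_const2) auto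
  qed
  have Uc: "continuous_on UNIV U"
    by (rule lipschitz_on_continuous_on[where L=Bd], rule lipschitz_onI) (use Ulip Bd0 in \<open>auto simp: dist_real_def\<close>)
  have Vc: "continuous_on UNIV V"
    by (rule lipschitz_on_continuous_on[where L=Bd], rule lipschitz_onI) (use Vlip Bd0 in \<open>auto simp: dist_real_def\<close>)
  define G1 where "G1 s = F1 (U s) (V s)" for s
  define G2 where "G2 s = F2 (U s) (V s)" for s
  have G1m[measurable]: "G1 \<in> borel_measurable lborel"
    unfolding G1_def using borel_measurable_continuous_onI[OF F1c[OF Uc Vc]] by simp
  have G2m[measurable]: "G2 \<in> borel_measurable lborel"
    unfolding G2_def using borel_measurable_continuous_onI[OF F2c[OF Uc Vc]] by simp
  have G1b: "\<bar>G1 s\<bar> \<le> Bd" for s unfolding G1_def by (rule F1b)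
  have G2b: "\<bar>G2 s\<bar> \<le> Bd" for s unfolding G2_def by (rule F2b)
  have Ueq: "U t = f0 + Prim G1 t" if t: "t \<in> {0..T}" for t
  proof -
    have "(\<lambda>k. u (Suc k) t) \<longlonglongrightarrow> U t" using LIMSEQ_Suc[OF Ul[of t]] clid[OF t] by simp
    moreover have "(\<lambda>k. u (Suc k) t) \<longlonglongrightarrow> f0 + Prim G1 t"
    proof -
      have "(\<lambda>k. Prim (g k) t) \<longlonglongrightarrow> Prim G1 t"
      proof (rule Prim_lim[OF gm G1m gb])
        show "AE s in lborel. s \<in> {0..t} \<longrightarrow> (\<lambda>k. g k s) \<longlonglongrightarrow> G1 s"
        proof (rule AE_I2, rule impI)
          fix s assume "s \<in> {0..t}" then have sT: "s \<in> {0..T}" using t by auto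
          show "(\<lambda>k. g k s) \<longlonglongrightarrow> G1 s"
            unfolding g_def G1_def F1_def using Ul[of s] Vl[of s] clid[OF sT] pos
            by (intro tendsto_F) auto
        qed
      qed
      then show ?thesis unfolding uS g_def[abs_def] by (intro tendsto_intros)
    qed
    ultimately show ?thesis by (rule LIMSEQ_unique)
  qed
  have Veq: "V t = m0 + Prim G2 t" if t: "t \<in> {0..T}" for t
  proof -
    have "(\<lambda>k. v (Suc k) t) \<longlonglongrightarrow> V t" using LIMSEQ_Suc[OF Vl[of t]] clid[OF t] by simp
    moreover have "(\<lambda>k. v (Suc k) t) \<longlonglongrightarrow> m0 + Prim G2 t"
    proof -
      have "(\<lambda>k. Prim (h k) t) \<longlonglongrightarrow> Prim G2 t"
      proof (rule Prim_lim[OF hm G2m hb])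
        show "AE s in lborel. s \<in> {0..t} \<longrightarrow> (\<lambda>k. h k s) \<longlonglongrightarrow> G2 s"
        proof (rule AE_I2, rule impI)
          fix s assume "s \<in> {0..t}" then have sT: "s \<in> {0..T}" using t by auto
          show "(\<lambda>k. h k s) \<longlonglongrightarrow> G2 s"
            unfolding h_def G2_def F2_def using Ul[of s] Vl[of s] clid[OF sT] pos
            by (intro tendsto_F) auto
        qed
      qed
      then show ?thesis unfolding vS h_def[abs_def] by (intro tendsto_intros)
    qed
    ultimately show ?thesis by (rule LIMSEQ_unique)
  qed
  have T0: "0 \<in> {0..T}" using pos by simp
  have U0: "U 0 = f0" using Ueq[OF T0] by (simp add: Prim_0)
  have V0: "V 0 = m0" using Veq[OF T0] by (simp add: Prim_0)
  have Upos: "0 \<le> U t" if t: "t \<in> {0..T}" for t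
  proof -
    have "(\<lambda>t. - U t) t \<le> 0"
    proof (rule barrier[where \<phi>="\<lambda>t. - U t" and h="\<lambda>s. - G1 s" and B=Bd and T=T])
      show "(\<lambda>s. - G1 s) \<in> borel_measurable lborel" by measurable
      show "\<bar>- G1 x\<bar> \<le> Bd" for x using G1b by simp
      show "continuous_on {0..T} (\<lambda>t. - U t)" using Uc by (intro continuous_intros) (auto intro: continuous_on_subset)
      show "- U t = - U 0 + Prim (\<lambda>s. - G1 s) t" if "t \<in> {0..T}" for t
        using Ueq[OF that] U0 by (simp add: Prim_uminus)
      show "- U 0 \<le> 0" using U0 f0 by simp
      show "- G1 s \<le> 0" if "s \<in> {0..T}" "0 < - U s" for s
      proof -
        have "clip M (U s) = 0" using that(2) by (simp add: clip_def)
        then show ?thesis by (simp add: G1_def F1_def rhs_f_def)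
      qed
    qed (use t in auto)
    then show ?thesis by simp
  qed
  have Vpos: "0 \<le> V t" if t: "t \<in> {0..T}" for t
  proof -
    have "(\<lambda>t. - V t) t \<le> 0"
    proof (rule barrier[where \<phi>="\<lambda>t. - V t" and h="\<lambda>s. - G2 s" and B=Bd and T=T])
      show "(\<lambda>s. - G2 s) \<in> borel_measurable lborel" by measurable
      show "\<bar>- G2 x\<bar> \<le> Bd" for x using G2b by simp
      show "continuous_on {0..T} (\<lambda>t. - V t)" using Vc by (intro continuous_intros) (auto intro: continuous_on_subset)
      show "- V t = - V 0 + Prim (\<lambda>s. - G2 s) t" if "t \<in> {0..T}" for t
        using Veq[OF that] V0 by (simp add: Prim_uminus)
      show "- V 0 \<le> 0" using V0 m0 by simp
      show "- G2 s \<le> 0" if "s \<in> {0..T}" "0 < - V s" for s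
      proof -
        have "clip M (V s) = 0" using that(2) by (simp add: clip_def)
        then show ?thesis by (simp add: G2_def F2_def rhs_f_def)
      qed
    qed (use t in auto)
    then show ?thesis by simp
  qed
  have UVM: "U t + V t \<le> M" if t: "t \<in> {0..T}" for t
  proof -
    have "(\<lambda>t. U t + V t) t \<le> M"
    proof (rule barrier[where \<phi>="\<lambda>t. U t + V t" and h="\<lambda>s. G1 s + G2 s" and B="2*Bd" and T=T])
      show "(\<lambda>s. G1 s + G2 s) \<in> borel_measurable lborel" by measurable
      show "\<bar>G1 x + G2 x\<bar> \<le> 2 * Bd" for x using G1b[of x] G2b[of x] by linarith
      show "continuous_on {0..T} (\<lambda>t. U t + V t)" using Uc Vc by (intro continuous_intros) (auto intro: continuous_on_subset)
      show "U t + V t = U 0 + V 0 + Prim (\<lambda>s. G1 s + G2 s) t" if "t \<in> {0..T}" for t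
        using Ueq[OF that] Veq[OF that] U0 V0 Prim_add[OF G1m G2m G1b G2b, of t] by simp
      show "U 0 + V 0 \<le> M" using U0 V0 Mf by simp
      show "G1 s + G2 s \<le> 0" if s: "s \<in> {0..T}" "M < U s + V s" for s
      proof -
        define x where "x = clip M (U s)"
        define y where "y = clip M (V s)"
        have xy: "0 \<le> x" "0 \<le> y" using clip_range[OF M0] by (auto simp: x_def y_def)
        have "K \<le> x + y"
        proof (cases "U s \<le> M \<and> V s \<le> M")
          case True
          then have "x = U s" "y = V s" using Upos[OF s(1)] Vpos[OF s(1)] by (auto simp: x_def y_def clip_id)
          then show ?thesis using s(2) MK by simp
        next
          case False
          then have "x = M \<or> y = M" using M0 by (auto simp: x_def y_def clip_def)
          then show ?thesis using xy MK by auto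
        qed
        then have "rhs_f \<beta> \<delta> K 0 x y + rhs_f \<beta> \<delta> K 0 y x \<le> 0"
          using pos by (intro sumF_nonpos[OF xy]) auto
        then show ?thesis unfolding G1_def G2_def F1_def F2_def x_def y_def .
      qed
    qed (use t in auto)
    then show ?thesis by simp
  qed
  have box: "0 \<le> U t \<and> U t \<le> M \<and> 0 \<le> V t \<and> V t \<le> M" if "t \<in> {0..T}" for t
    using Upos[OF that] Vpos[OF that] UVM[OF that] by linarith
  have G1eq: "G1 s = rhs_f \<beta> \<delta> K 0 (U s) (V s)" if "s \<in> {0..T}" for s
    using box[OF that] by (simp add: G1_def F1_def clip_id)
  have G2eq: "G2 s = rhs_m \<beta> \<delta> K 0 (U s) (V s)" if "s \<in> {0..T}" for s
    using box[OF that] by (simp add: G2_def F2_def clip_id rhs_m_swap)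
  have rfm: "(\<lambda>s. rhs_f \<beta> \<delta> K 0 (U s) (V s)) \<in> borel_measurable lborel"
    using borel_measurable_continuous_onI[OF cont_rhs[OF pos(3) Uc Vc]] by simp
  have rmm: "(\<lambda>s. rhs_m \<beta> \<delta> K 0 (U s) (V s)) \<in> borel_measurable lborel"
    using borel_measurable_continuous_onI[OF cont_rhs[OF pos(3) Vc Uc]] by (simp add: rhs_m_swap)
  show ?thesis
  proof (intro exI)
    show "is_state \<beta> \<delta> K T f0 m0 (\<lambda>_. 0) (\<lambda>_. 0) U V"
      unfolding is_state_def
    proof (intro conjI ballI)
      show "continuous_on {0..T} U" using Uc by (auto intro: continuous_on_subset)
      show "continuous_on {0..T} V" using Vc by (auto intro: continuous_on_subset)
      fix t assume t: "t \<in> {0..T}"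
      have sub: "s \<in> {0..T}" if "s \<in> {0..t}" for s using that t by auto
      show "set_integrable lborel {0..t} (\<lambda>s. rhs_f \<beta> \<delta> K ((\<lambda>_. 0) s) (U s) (V s))"
        by (rule sint_bdd[OF rfm, where B=Bd]) (metis G1eq G1b sub)
      show "set_integrable lborel {0..t} (\<lambda>s. rhs_m \<beta> \<delta> K ((\<lambda>_. 0) s) (U s) (V s))"
        by (rule sint_bdd[OF rmm, where B=Bd]) (metis G2eq G2b sub)
      have "Prim G1 t = (LINT s:{0..t}|lborel. rhs_f \<beta> \<delta> K 0 (U s) (V s))"
        unfolding Prim_def by (rule set_lebesgue_integral_cong) (use G1eq sub in auto)
      then show "U t = f0 + (LINT s:{0..t}|lborel. rhs_f \<beta> \<delta> K ((\<lambda>_. 0) s) (U s) (V s))"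
        using Ueq[OF t] by simp
      have "Prim G2 t = (LINT s:{0..t}|lborel. rhs_m \<beta> \<delta> K 0 (U s) (V s))"
        unfolding Prim_def by (rule set_lebesgue_integral_cong) (use G2eq sub in auto)
      then show "V t = m0 + (LINT s:{0..t}|lborel. rhs_m \<beta> \<delta> K ((\<lambda>_. 0) s) (U s) (V s))"
        using Veq[OF t] by simp
    qed
  qed
qed

definition clT :: "real \<Rightarrow> real \<Rightarrow> real" where "clT T t = max 0 (min T t)"

lemma clT_range: "0 \<le> T \<Longrightarrow> clT T t \<in> {0..T}" by (auto simp: clT_def)
lemma clT_id: "t \<in> {0..T} \<Longrightarrow> clT T t = t" by (auto simp: clT_def)
lemma clT_idem: "0 \<le> T \<Longrightarrow> clT T (clT T t) = clT T t" by (auto simp: clT_def)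
lemma clT_lip: "\<bar>clT T x - clT T y\<bar> \<le> \<bar>x - y\<bar>" by (auto simp: clT_def)
lemma clT_cont: "continuous_on UNIV (clT T)" unfolding clT_def by (intro continuous_intros)

lemma cont_clT:
  assumes "continuous_on {0..T} f" "0 \<le> T"
  shows "continuous_on UNIV (\<lambda>t. f (clT T t))"
  by (rule continuous_on_compose2[OF assms(1) clT_cont]) (use clT_range assms(2) in auto)

lemma bdd_clT:
  fixes f :: "real \<Rightarrow> real"
  assumes "continuous_on {0..T} f" "0 \<le> T"
  obtains P where "\<And>t. \<bar>f (clT T t)\<bar> \<le> P"
proof -
  have "compact (f ` {0..T})" by (rule compact_continuous_image[OF assms(1)]) simp
  then obtain P where "\<forall>x\<in>f ` {0..T}. norm x \<le> P" using compact_imp_bounded bounded_iff by metis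
  then show ?thesis using that clT_range[OF assms(2)] by fastforce
qed

lemma rhs_m_factor: "rhs_m \<beta> \<delta> K e x y = y * (1/2 * x * \<beta> * Lfac K x y - \<delta> - e)"
  by (simp add: rhs_m_def algebra_simps)

lemma rhs_f_e: "rhs_f \<beta> \<delta> K e x y = rhs_f \<beta> \<delta> K 0 x y - e * x"
  by (simp add: rhs_f_def)

lemma rhs_m_e: "rhs_m \<beta> \<delta> K e x y = rhs_m \<beta> \<delta> K 0 x y - e * y"
  by (simp add: rhs_m_def)

lemma sum_nonpos_e:
  assumes "0 \<le> x" "0 \<le> y" "K \<le> x + y" "0 < K" "0 \<le> \<beta>" "0 \<le> \<delta>" "0 \<le> e1" "0 \<le> e2"
  shows "rhs_f \<beta> \<delta> K e1 x y + rhs_m \<beta> \<delta> K e2 x y \<le> 0"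
proof -
  have "rhs_f \<beta> \<delta> K e1 x y + rhs_m \<beta> \<delta> K e2 x y = (rhs_f \<beta> \<delta> K 0 x y + rhs_f \<beta> \<delta> K 0 y x) - e1 * x - e2 * y"
    by (simp add: rhs_f_def rhs_m_def Lfac_def algebra_simps)
  moreover have "rhs_f \<beta> \<delta> K 0 x y + rhs_f \<beta> \<delta> K 0 y x \<le> 0" by (rule sumF_nonpos[OF assms(1-6)])
  moreover have "0 \<le> e1 * x" "0 \<le> e2 * y" using assms by auto
  ultimately show ?thesis by linarith
qed

lemma rhs_f_meas[measurable]:
  assumes [measurable]: "e \<in> borel_measurable lborel" "f \<in> borel_measurable lborel" "m \<in> borel_measurable lborel"
  shows "(\<lambda>s. rhs_f \<beta> \<delta> K (e s) (f s) (m s)) \<in> borel_measurable lborel"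
  unfolding rhs_f_def Lfac_def by measurable

lemma rhs_m_meas[measurable]:
  assumes [measurable]: "e \<in> borel_measurable lborel" "f \<in> borel_measurable lborel" "m \<in> borel_measurable lborel"
  shows "(\<lambda>s. rhs_m \<beta> \<delta> K (e s) (f s) (m s)) \<in> borel_measurable lborel"
  unfolding rhs_m_def Lfac_def by measurable

lemma abs_bound3: "\<bar>X\<bar> \<le> Q \<Longrightarrow> 0 \<le> (d::real) \<Longrightarrow> 0 \<le> e \<Longrightarrow> e \<le> 1 \<Longrightarrow> \<bar>X - d - e\<bar> \<le> Q + d + 1"
  by arith

lemma normalize:
  fixes \<beta> \<delta> K T f0 m0 :: real
  assumes pos: "0 < \<beta>" "0 < \<delta>" "0 < K" "0 < T" and f0: "0 \<le> f0" and m0: "0 \<le> m0"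
    and U: "(e1, e2) \<in> U4 T" and st: "is_state \<beta> \<delta> K T f0 m0 e1 e2 f m"
  defines "eh1 \<equiv> (\<lambda>t. indicator {0..T} t * e1 t)" and "eh2 \<equiv> (\<lambda>t. indicator {0..T} t * e2 t)"
    and "fh \<equiv> (\<lambda>t. f (clT T t))" and "mh \<equiv> (\<lambda>t. m (clT T t))"
  shows "eh1 \<in> borel_measurable lborel" "eh2 \<in> borel_measurable lborel"
    "\<And>t. 0 \<le> eh1 t \<and> eh1 t \<le> 1" "\<And>t. 0 \<le> eh2 t \<and> eh2 t \<le> 1"
    "continuous_on UNIV fh" "continuous_on UNIV mh"
    "\<And>t. 0 \<le> fh t \<and> 0 \<le> mh t \<and> fh t + mh t \<le> max (f0 + m0) K"
    "\<And>t. t \<in> {0..T} \<Longrightarrow> fh t = f0 + Prim (\<lambda>s. rhs_f \<beta> \<delta> K (eh1 s) (fh s) (mh s)) t"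
    "\<And>t. t \<in> {0..T} \<Longrightarrow> mh t = m0 + Prim (\<lambda>s. rhs_m \<beta> \<delta> K (eh2 s) (fh s) (mh s)) t"
    "J4 T e1 e2 f m = Prim (\<lambda>t. - (fh t + mh t) - 1/2 * ((eh1 t)\<^sup>2 + (eh2 t)\<^sup>2)) T"
    "\<And>t. t \<in> {0..T} \<Longrightarrow> fh t = f t" "\<And>t. t \<in> {0..T} \<Longrightarrow> mh t = m t"
proof -
  have T0: "0 \<le> T" using pos by simp
  show e1m: "eh1 \<in> borel_measurable lborel" using U
    unfolding U4_def set_borel_measurable_def eh1_def by auto
  show e2m: "eh2 \<in> borel_measurable lborel" using U
    unfolding U4_def set_borel_measurable_def eh2_def by auto
  show e1b: "0 \<le> eh1 t \<and> eh1 t \<le> 1" for t using U unfolding U4_def eh1_def by (auto simp: indicator_def)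
  show e2b: "0 \<le> eh2 t \<and> eh2 t \<le> 1" for t using U unfolding U4_def eh2_def by (auto simp: indicator_def)
  have fc: "continuous_on {0..T} f" and mc: "continuous_on {0..T} m" using st by (auto simp: is_state_def)
  show fhc: "continuous_on UNIV fh" unfolding fh_def by (rule cont_clT[OF fc T0])
  show mhc: "continuous_on UNIV mh" unfolding mh_def by (rule cont_clT[OF mc T0])
  have fhm[measurable]: "fh \<in> borel_measurable lborel" using borel_measurable_continuous_onI[OF fhc] by simp
  have mhm[measurable]: "mh \<in> borel_measurable lborel" using borel_measurable_continuous_onI[OF mhc] by simp
  note [measurable] = e1m e2m
  show fid: "fh t = f t" if "t \<in> {0..T}" for t using that by (simp add: fh_def clT_id)
  show mid: "mh t = m t" if "t \<in> {0..T}" for t using that by (simp add: mh_def clT_id)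
  have sub: "s \<in> {0..T}" if "s \<in> {0..t}" "t \<in> {0..T}" for s t using that by auto
  show feq: "fh t = f0 + Prim (\<lambda>s. rhs_f \<beta> \<delta> K (eh1 s) (fh s) (mh s)) t" if t: "t \<in> {0..T}" for t
  proof -
    have "f t = f0 + (LINT s:{0..t}|lborel. rhs_f \<beta> \<delta> K (e1 s) (f s) (m s))" using st t by (auto simp: is_state_def)
    also have "(LINT s:{0..t}|lborel. rhs_f \<beta> \<delta> K (e1 s) (f s) (m s)) = Prim (\<lambda>s. rhs_f \<beta> \<delta> K (eh1 s) (fh s) (mh s)) t"
      unfolding Prim_def
      by (rule set_lebesgue_integral_cong) (use sub[OF _ t] fid mid in \<open>auto simp: eh1_def\<close>)
    finally show ?thesis using fid[OF t] by simp
  qed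
  show meq: "mh t = m0 + Prim (\<lambda>s. rhs_m \<beta> \<delta> K (eh2 s) (fh s) (mh s)) t" if t: "t \<in> {0..T}" for t
  proof -
    have "m t = m0 + (LINT s:{0..t}|lborel. rhs_m \<beta> \<delta> K (e2 s) (f s) (m s))" using st t by (auto simp: is_state_def)
    also have "(LINT s:{0..t}|lborel. rhs_m \<beta> \<delta> K (e2 s) (f s) (m s)) = Prim (\<lambda>s. rhs_m \<beta> \<delta> K (eh2 s) (fh s) (mh s)) t"
      unfolding Prim_def
      by (rule set_lebesgue_integral_cong) (use sub[OF _ t] fid mid in \<open>auto simp: eh2_def\<close>)
    finally show ?thesis using mid[OF t] by simp
  qed
  show "J4 T e1 e2 f m = Prim (\<lambda>t. - (fh t + mh t) - 1/2 * ((eh1 t)\<^sup>2 + (eh2 t)\<^sup>2)) T"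
    unfolding J4_def Prim_def
    by (rule set_lebesgue_integral_cong) (use fid mid in \<open>auto simp: eh1_def eh2_def\<close>)
  obtain Pf where Pf: "\<And>t. \<bar>fh t\<bar> \<le> Pf" using bdd_clT[OF fc T0] unfolding fh_def by blast
  obtain Pm where Pm: "\<And>t. \<bar>mh t\<bar> \<le> Pm" using bdd_clT[OF mc T0] unfolding mh_def by blast
  define P where "P = max Pf Pm"
  have P: "\<bar>fh t\<bar> \<le> P" "\<bar>mh t\<bar> \<le> P" for t using Pf[of t] Pm[of t] by (auto simp: P_def)
  have P0: "0 \<le> P" using P(1)[of 0] by simp
  have Lb: "\<bar>Lfac K (fh t) (mh t)\<bar> \<le> 1 + 2 * P / K" for t
  proof -
    have s1: "\<bar>fh t + mh t\<bar> \<le> 2 * P" using P[of t] abs_triangle_ineq[of "fh t" "mh t"] by linarith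
    have "\<bar>fh t + mh t\<bar> / K \<le> 2 * P / K" by (rule divide_right_mono[OF s1]) (use pos in simp)
    moreover have "\<bar>(fh t + mh t) / K\<bar> = \<bar>fh t + mh t\<bar> / K" using pos by (simp add: abs_divide)
    ultimately have "\<bar>(fh t + mh t) / K\<bar> \<le> 2 * P / K" by linarith
    then show ?thesis unfolding Lfac_def by linarith
  qed
  define G where "G = 1/2 * P * \<beta> * (1 + 2 * P / K) + \<delta> + 1"
  define g1 where "g1 s = 1/2 * mh s * \<beta> * Lfac K (fh s) (mh s) - \<delta> - eh1 s" for s
  define g2 where "g2 s = 1/2 * fh s * \<beta> * Lfac K (fh s) (mh s) - \<delta> - eh2 s" for s
  have g1m: "g1 \<in> borel_measurable lborel" unfolding g1_def Lfac_def by measurable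
  have g2m: "g2 \<in> borel_measurable lborel" unfolding g2_def Lfac_def by measurable
  have prodb: "\<bar>1/2 * a * \<beta> * Lfac K (fh s) (mh s)\<bar> \<le> 1/2 * P * \<beta> * (1 + 2 * P / K)" if "\<bar>a\<bar> \<le> P" for a s
  proof -
    have "\<bar>1/2 * a * \<beta> * Lfac K (fh s) (mh s)\<bar> = 1/2 * \<beta> * (\<bar>a\<bar> * \<bar>Lfac K (fh s) (mh s)\<bar>)"
      using pos by (simp add: abs_mult)
    also have "\<dots> \<le> 1/2 * \<beta> * (P * (1 + 2 * P / K))"
      using pos that Lb[of s] P0 by (intro mult_left_mono mult_mono) auto
    finally show ?thesis by (simp add: algebra_simps)
  qed
  have g1b: "\<bar>g1 s\<bar> \<le> G" for s
    unfolding g1_def G_def by (rule abs_bound3[OF prodb[OF P(2), of s]]) (use e1b[of s] pos in auto)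
  have g2b: "\<bar>g2 s\<bar> \<le> G" for s
    unfolding g2_def G_def by (rule abs_bound3[OF prodb[OF P(1), of s]]) (use e2b[of s] pos in auto)
  have T0': "0 \<in> {0..T}" using T0 by simp
  have fh0: "fh 0 = f0" using feq[OF T0'] by (simp add: Prim_0)
  have mh0: "mh 0 = m0" using meq[OF T0'] by (simp add: Prim_0)
  have fpos: "0 \<le> fh t" if "t \<in> {0..T}" for t
  proof (rule nonneg_lin[OF g1m g1b fhc P(1), where T=T])
    show "fh t = fh 0 + Prim (\<lambda>s. fh s * g1 s) t" if "t \<in> {0..T}" for t
      using feq[OF that] fh0 by (simp add: rhs_f_factor g1_def)
  qed (use f0 fh0 that in auto)
  have mpos: "0 \<le> mh t" if "t \<in> {0..T}" for t
  proof (rule nonneg_lin[OF g2m g2b mhc P(2), where T=T])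
    show "mh t = mh 0 + Prim (\<lambda>s. mh s * g2 s) t" if "t \<in> {0..T}" for t
      using meq[OF that] mh0 by (simp add: rhs_m_factor g2_def)
  qed (use m0 mh0 that in auto)
  define M where "M = max (f0 + m0) K"
  define H where "H s = rhs_f \<beta> \<delta> K (eh1 s) (fh s) (mh s) + rhs_m \<beta> \<delta> K (eh2 s) (fh s) (mh s)" for s
  have Hm: "H \<in> borel_measurable lborel" unfolding H_def by measurable
  have fallpos: "0 \<le> fh t" "0 \<le> mh t" for t
    using fpos[OF clT_range[OF T0]] mpos[OF clT_range[OF T0]] clT_idem[OF T0]
    by (auto simp: fh_def mh_def)
  define C where "C = \<beta> * P * P * (1 + 2 * P / K) + \<delta> * P + P"
  have rfb: "\<bar>rhs_f \<beta> \<delta> K (eh1 s) (fh s) (mh s)\<bar> \<le> C" for s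
    unfolding C_def using pos e1b[of s] fallpos[of s] P[of s] by (intro rhs_f_bound) auto
  have rmb: "\<bar>rhs_m \<beta> \<delta> K (eh2 s) (fh s) (mh s)\<bar> \<le> C" for s
    unfolding C_def rhs_m_swap using pos e2b[of s] fallpos[of s] P[of s] by (intro rhs_f_bound) auto
  have Hb: "\<bar>H s\<bar> \<le> 2 * C" for s using rfb[of s] rmb[of s] unfolding H_def by linarith
  have sumle: "fh t + mh t \<le> M" if t: "t \<in> {0..T}" for t
  proof (rule barrier[where \<phi>="\<lambda>t. fh t + mh t" and h=H and B="2*C" and T=T, OF Hm Hb])
    show "continuous_on {0..T} (\<lambda>t. fh t + mh t)" using fhc mhc by (intro continuous_intros) (auto intro: continuous_on_subset)
    show "fh t + mh t = fh 0 + mh 0 + Prim H t" if "t \<in> {0..T}" for t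
      using feq[OF that] meq[OF that] fh0 mh0 Prim_add[of "\<lambda>s. rhs_f \<beta> \<delta> K (eh1 s) (fh s) (mh s)" "\<lambda>s. rhs_m \<beta> \<delta> K (eh2 s) (fh s) (mh s)" C t] rfb rmb
      unfolding H_def by simp
    show "fh 0 + mh 0 \<le> M" using fh0 mh0 by (simp add: M_def)
    show "H s \<le> 0" if "s \<in> {0..T}" "M < fh s + mh s" for s
      unfolding H_def using that fallpos[of s] e1b[of s] e2b[of s] pos
      by (intro sum_nonpos_e) (auto simp: M_def)
  qed (use t in auto)
  show "0 \<le> fh t \<and> 0 \<le> mh t \<and> fh t + mh t \<le> max (f0 + m0) K" for t
    using fallpos[of t] sumle[OF clT_range[OF T0, of t]] clT_idem[OF T0]
    by (auto simp: fh_def mh_def M_def)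
qed

lemma Prim_cmult: "Prim (\<lambda>s. c * g s) t = c * Prim g t"
  unfolding Prim_def by simp

lemma Prim_add_int:
  assumes "set_integrable lborel {0..t} g" "set_integrable lborel {0..t} h"
  shows "Prim (\<lambda>s. g s + h s) t = Prim g t + Prim h t"
  unfolding Prim_def using set_integral_add(2)[OF assms] by simp

lemma Prim_sum:
  fixes \<phi> :: "nat \<Rightarrow> real \<Rightarrow> real"
  assumes m: "\<And>j. \<phi> j \<in> borel_measurable lborel" and b: "\<And>j s. \<bar>\<phi> j s\<bar> \<le> B"
  shows "Prim (\<lambda>s. \<Sum>j<N. c j * \<phi> j s) t = (\<Sum>j<N. c j * Prim (\<phi> j) t)"
proof (induction N)
  case 0 then show ?case by (simp add: Prim_def)
next
  case (Suc N)
  have B0: "0 \<le> B" using b[of 0 0] by simp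
  have i1: "set_integrable lborel {0..t} (\<lambda>s. \<Sum>j<N. c j * \<phi> j s)"
  proof (rule sint_bdd[where B="\<Sum>j<N. \<bar>c j\<bar> * B"])
    show "(\<lambda>s. \<Sum>j<N. c j * \<phi> j s) \<in> borel_measurable lborel" using m by measurable
    show "\<bar>\<Sum>j<N. c j * \<phi> j s\<bar> \<le> (\<Sum>j<N. \<bar>c j\<bar> * B)" for s
    proof -
      have "\<bar>\<Sum>j<N. c j * \<phi> j s\<bar> \<le> (\<Sum>j<N. \<bar>c j * \<phi> j s\<bar>)" by (rule sum_abs)
      also have "\<dots> \<le> (\<Sum>j<N. \<bar>c j\<bar> * B)" using b by (intro sum_mono) (simp add: abs_mult mult_left_mono)
      finally show ?thesis .
    qed
  qed
  have i2: "set_integrable lborel {0..t} (\<lambda>s. c N * \<phi> N s)"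
    by (rule sint_bdd[where B="\<bar>c N\<bar> * B"]) (use m b in \<open>auto simp: abs_mult mult_left_mono\<close>)
  have "Prim (\<lambda>s. \<Sum>j<Suc N. c j * \<phi> j s) t = Prim (\<lambda>s. (\<Sum>j<N. c j * \<phi> j s) + c N * \<phi> N s) t" by simp
  also have "\<dots> = Prim (\<lambda>s. \<Sum>j<N. c j * \<phi> j s) t + Prim (\<lambda>s. c N * \<phi> N s) t" by (rule Prim_add_int[OF i1 i2])
  also have "\<dots> = (\<Sum>j<Suc N. c j * Prim (\<phi> j) t)" using Suc by (simp add: Prim_cmult)
  finally show ?case .
qed

lemma Prim_mono:
  fixes g h :: "real \<Rightarrow> real"
  assumes "g \<in> borel_measurable lborel" "h \<in> borel_measurable lborel" "\<And>x. \<bar>g x\<bar> \<le> B" "\<And>x. \<bar>h x\<bar> \<le> B"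
    and le: "\<And>x. x \<in> {0..t} \<Longrightarrow> g x \<le> h x"
  shows "Prim g t \<le> Prim h t"
  unfolding Prim_def by (rule set_integral_mono) (use sint_bdd assms in blast)+

lemma Prim_diff_int:
  assumes "set_integrable lborel {0..t} g" "set_integrable lborel {0..t} h"
  shows "Prim (\<lambda>s. g s - h s) t = Prim g t - Prim h t"
  unfolding Prim_def using set_integral_diff(2)[OF assms] by simp

lemma sint_bdd':
  fixes h :: "real \<Rightarrow> real"
  assumes "h \<in> borel_measurable lborel" "\<And>x. \<bar>h x\<bar> \<le> B"
  shows "set_integrable lborel {0..t} h"
  using sint_bdd assms by blast

lemma neg3': "0 \<le> (a::real) \<Longrightarrow> 0 \<le> b \<Longrightarrow> 0 \<le> X \<Longrightarrow> - (a + b) - X \<le> 0"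
  by linarith

lemma neg3: "0 \<le> (a::real) \<Longrightarrow> 0 \<le> b \<Longrightarrow> 0 \<le> p\<^sup>2 + q\<^sup>2 \<Longrightarrow> - (a + b) - 1/2 * (p\<^sup>2 + q\<^sup>2) \<le> 0"
  by (rule neg3') simp_all

theorem mainTheorem8:
  fixes \<beta> \<delta> K T f0 m0 :: real
  assumes "0 < \<beta>" "\<beta> < 1" "0 < \<delta>" "\<delta> < 1" "0 < K" "0 < T"
    and "0 \<le> f0" "0 \<le> m0"
  shows "\<exists>e1s e2s fs ms. (e1s, e2s) \<in> U4 T \<and> is_state \<beta> \<delta> K T f0 m0 e1s e2s fs ms \<and>
           (\<forall>e1 e2 f m. (e1, e2) \<in> U4 T \<longrightarrow> is_state \<beta> \<delta> K T f0 m0 e1 e2 f m \<longrightarrow>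
               J4 T e1 e2 f m \<le> J4 T e1s e2s fs ms)"
proof -
  have pos: "0 < \<beta>" "0 < \<delta>" "0 < K" "0 < T" using assms by auto
  have f0: "0 \<le> f0" and m0: "0 \<le> m0" using assms by auto
  have T0: "0 \<le> T" using pos by simp
  define M where "M = max (f0 + m0) K"
  have M0: "0 \<le> M" using pos f0 m0 by (auto simp: M_def)
  define C where "C = \<beta> * M * M * (1 + 2 * M / K) + \<delta> * M + M"
  define Ad where "Ad e1 e2 f m \<longleftrightarrow> (e1, e2) \<in> U4 T \<and> is_state \<beta> \<delta> K T f0 m0 e1 e2 f m" for e1 e2 f m
  define Jv where "Jv = {J4 T e1 e2 f m | e1 e2 f m. Ad e1 e2 f m}"
  note N = normalize[OF pos f0 m0]
  have Jle0: "J4 T e1 e2 f m \<le> 0" if "Ad e1 e2 f m" for e1 e2 f m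
  proof -
    have U: "(e1, e2) \<in> U4 T" and st: "is_state \<beta> \<delta> K T f0 m0 e1 e2 f m" using that by (auto simp: Ad_def)
    note NN = N[OF U st]
    have "Prim (\<lambda>t. - (f (clT T t) + m (clT T t)) - 1/2 * ((indicator {0..T} t * e1 t)\<^sup>2 + (indicator {0..T} t * e2 t)\<^sup>2)) T \<le> 0"
      unfolding Prim_def
    proof (rule sint_nonpos)
      show "(\<lambda>t. - (f (clT T t) + m (clT T t)) - 1/2 * ((indicator {0..T} t * e1 t)\<^sup>2 + (indicator {0..T} t * e2 t)\<^sup>2)) \<in> borel_measurable lborel"
        using NN(1,2) borel_measurable_continuous_onI[OF NN(5)] borel_measurable_continuous_onI[OF NN(6)] by measurable
      show "- (f (clT T x) + m (clT T x)) - 1/2 * ((indicator {0..T} x * e1 x)\<^sup>2 + (indicator {0..T} x * e2 x)\<^sup>2) \<le> 0" for x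
        using NN(7)[of x] by (intro neg3) auto
    qed
    then show ?thesis using NN(10) by simp
  qed
  obtain U0 V0 where st0: "is_state \<beta> \<delta> K T f0 m0 (\<lambda>_. 0) (\<lambda>_. 0) U0 V0"
    using exists_state0[OF pos f0 m0] by blast
  have U40: "((\<lambda>_::real. 0::real), (\<lambda>_::real. 0::real)) \<in> U4 T"
    unfolding U4_def set_borel_measurable_def by auto
  have "J4 T (\<lambda>_. 0) (\<lambda>_. 0) U0 V0 \<in> Jv" unfolding Jv_def Ad_def using st0 U40 by blast
  then have Jne: "Jv \<noteq> {}" by blast
  have Jbdd: "bdd_above Jv" unfolding Jv_def by (rule bdd_aboveI[where M=0]) (use Jle0 in auto)
  define Js where "Js = Sup Jv"
  have Jup: "J4 T e1 e2 f m \<le> Js" if "Ad e1 e2 f m" for e1 e2 f m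
    unfolding Js_def by (rule cSup_upper[OF _ Jbdd]) (use that in \<open>auto simp: Jv_def\<close>)
  have "\<forall>n::nat. \<exists>e1 e2 f m. Ad e1 e2 f m \<and> Js - 1 / Suc n < J4 T e1 e2 f m"
  proof
    fix n :: nat
    have "Js - 1 / Suc n < Sup Jv" unfolding Js_def by simp
    from less_cSupD[OF Jne this] show "\<exists>e1 e2 f m. Ad e1 e2 f m \<and> Js - 1 / Suc n < J4 T e1 e2 f m"
      by (auto simp: Jv_def)
  qed
  then obtain E1 E2 Fs Ms where EA: "\<And>n. Ad (E1 n) (E2 n) (Fs n) (Ms n)"
    and EJ: "\<And>n. Js - 1 / Suc n < J4 T (E1 n) (E2 n) (Fs n) (Ms n)"
    by metis
  define JE where "JE n = J4 T (E1 n) (E2 n) (Fs n) (Ms n)" for n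
  have JEl: "JE \<longlonglongrightarrow> Js"
  proof (rule real_tendsto_sandwich[where f="\<lambda>n. Js - 1 / Suc n" and h="\<lambda>n. Js"])
    show "\<forall>\<^sub>F n in sequentially. Js - 1 / real (Suc n) \<le> JE n" using EJ by (auto simp: JE_def less_imp_le)
    show "\<forall>\<^sub>F n in sequentially. JE n \<le> Js" using Jup EA by (auto simp: JE_def)
    have "(\<lambda>n. Js - inverse (real (Suc n))) \<longlonglongrightarrow> Js - 0" by (intro tendsto_intros LIMSEQ_inverse_real_of_nat)
    then show "(\<lambda>n. Js - 1 / real (Suc n)) \<longlonglongrightarrow> Js" by (simp add: divide_inverse)
  qed simp
  define eh1 where "eh1 n t = indicator {0..T} t * E1 n t" for n t
  define eh2 where "eh2 n t = indicator {0..T} t * E2 n t" for n t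
  define fh where "fh n t = Fs n (clT T t)" for n t
  define mh where "mh n t = Ms n (clT T t)" for n t
  have NU: "(E1 n, E2 n) \<in> U4 T" and Nst: "is_state \<beta> \<delta> K T f0 m0 (E1 n) (E2 n) (Fs n) (Ms n)" for n
    using EA by (auto simp: Ad_def)
  have e1m[measurable]: "eh1 n \<in> borel_measurable lborel" for n
    using N(1)[OF NU Nst] unfolding eh1_def[abs_def] by simp
  have e2m[measurable]: "eh2 n \<in> borel_measurable lborel" for n
    using N(2)[OF NU Nst] unfolding eh2_def[abs_def] by simp
  have e1b: "0 \<le> eh1 n t \<and> eh1 n t \<le> 1" for n t using N(3)[OF NU Nst] unfolding eh1_def by blast
  have e2b: "0 \<le> eh2 n t \<and> eh2 n t \<le> 1" for n t using N(4)[OF NU Nst] unfolding eh2_def by blast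
  have fhc: "continuous_on UNIV (fh n)" for n using N(5)[OF NU Nst] unfolding fh_def[abs_def] by simp
  have mhc: "continuous_on UNIV (mh n)" for n using N(6)[OF NU Nst] unfolding mh_def[abs_def] by simp
  have fhm[measurable]: "fh n \<in> borel_measurable lborel" for n using borel_measurable_continuous_onI[OF fhc] by simp
  have mhm[measurable]: "mh n \<in> borel_measurable lborel" for n using borel_measurable_continuous_onI[OF mhc] by simp
  have box: "0 \<le> fh n t \<and> 0 \<le> mh n t \<and> fh n t + mh n t \<le> M" for n t
    using N(7)[OF NU Nst] unfolding fh_def mh_def M_def by blast
  have fheq: "fh n t = f0 + Prim (\<lambda>s. rhs_f \<beta> \<delta> K (eh1 n s) (fh n s) (mh n s)) t" if "t \<in> {0..T}" for n t
    using N(8)[OF NU Nst that] unfolding fh_def mh_def eh1_def by simp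
  have mheq: "mh n t = m0 + Prim (\<lambda>s. rhs_m \<beta> \<delta> K (eh2 n s) (fh n s) (mh n s)) t" if "t \<in> {0..T}" for n t
    using N(9)[OF NU Nst that] unfolding fh_def mh_def eh2_def by simp
  have JEeq: "JE n = Prim (\<lambda>t. - (fh n t + mh n t) - 1/2 * ((eh1 n t)\<^sup>2 + (eh2 n t)\<^sup>2)) T" for n
    using N(10)[OF NU Nst] unfolding JE_def fh_def mh_def eh1_def eh2_def by simp
  have fhcl: "fh n (clT T t) = fh n t" "mh n (clT T t) = mh n t" for n t
    by (simp_all add: fh_def mh_def clT_idem[OF T0])
  have rfb: "\<bar>rhs_f \<beta> \<delta> K e x y\<bar> \<le> C" if "0 \<le> x" "0 \<le> y" "x + y \<le> M" "0 \<le> e" "e \<le> 1" for e x y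
    unfolding C_def using that pos by (intro rhs_f_bound) auto
  have rmb: "\<bar>rhs_m \<beta> \<delta> K e x y\<bar> \<le> C" if "0 \<le> x" "0 \<le> y" "x + y \<le> M" "0 \<le> e" "e \<le> 1" for e x y
    unfolding C_def rhs_m_swap using that pos by (intro rhs_f_bound) auto
  have C0: "0 \<le> C" using rfb[of 0 0 0] M0 by simp
  have Ff: "\<bar>rhs_f \<beta> \<delta> K (eh1 n s) (fh n s) (mh n s)\<bar> \<le> C" for n s using box e1b by (intro rfb) auto
  have Fm: "\<bar>rhs_m \<beta> \<delta> K (eh2 n s) (fh n s) (mh n s)\<bar> \<le> C" for n s using box e2b by (intro rmb) auto
  have flip: "\<bar>fh n x - fh n y\<bar> \<le> C * \<bar>x - y\<bar>" for n x y
  proof -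
    have "fh n x - fh n y = Prim (\<lambda>s. rhs_f \<beta> \<delta> K (eh1 n s) (fh n s) (mh n s)) (clT T x) - Prim (\<lambda>s. rhs_f \<beta> \<delta> K (eh1 n s) (fh n s) (mh n s)) (clT T y)"
      using fheq[OF clT_range[OF T0, of x]] fheq[OF clT_range[OF T0, of y]] fhcl by simp
    also have "\<bar>\<dots>\<bar> \<le> C * \<bar>clT T x - clT T y\<bar>" by (rule Prim_lip[OF _ Ff]) measurable
    also have "\<dots> \<le> C * \<bar>x - y\<bar>" using C0 clT_lip by (intro mult_left_mono) auto
    finally show ?thesis .
  qed
  have mlip: "\<bar>mh n x - mh n y\<bar> \<le> C * \<bar>x - y\<bar>" for n x y
  proof -
    have "mh n x - mh n y = Prim (\<lambda>s. rhs_m \<beta> \<delta> K (eh2 n s) (fh n s) (mh n s)) (clT T x) - Prim (\<lambda>s. rhs_m \<beta> \<delta> K (eh2 n s) (fh n s) (mh n s)) (clT T y)"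
      using mheq[OF clT_range[OF T0, of x]] mheq[OF clT_range[OF T0, of y]] fhcl by simp
    also have "\<bar>\<dots>\<bar> \<le> C * \<bar>clT T x - clT T y\<bar>" by (rule Prim_lip[OF _ Fm]) measurable
    also have "\<dots> \<le> C * \<bar>x - y\<bar>" using C0 clT_lip by (intro mult_left_mono) auto
    finally show ?thesis .
  qed
  have fbd: "\<bar>fh n t\<bar> \<le> M" "\<bar>mh n t\<bar> \<le> M" for n t using box[of n t] by auto
  obtain gA kA where gAc: "continuous_on {0..T} gA" and kA: "strict_mono (kA :: nat \<Rightarrow> nat)"
    and gAu: "\<And>e. 0 < e \<Longrightarrow> \<exists>N. \<forall>n x. n \<ge> N \<and> x \<in> {0..T} \<longrightarrow> norm ((fh (kA n) x, mh (kA n) x) - gA x) < e"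
  proof (rule Arzela_Ascoli[of "{0..T}" "\<lambda>n x. (fh n x, mh n x)" "2 * M"])
    show "compact {0..T::real}" by simp
    show "norm (fh n x, mh n x) \<le> 2 * M" for n x
      using norm_Pair_le[of "fh n x" "mh n x"] fbd[of n x] by simp
    fix x :: real and e :: real assume "x \<in> {0..T}" "0 < e"
    show "\<exists>d>0. \<forall>n y. y \<in> {0..T} \<and> norm (x - y) < d \<longrightarrow> norm ((fh n x, mh n x) - (fh n y, mh n y)) < e"
    proof (intro exI conjI allI impI)
      show "0 < e / (2 * C + 1)" using \<open>0 < e\<close> C0 by simp
      fix n y assume y: "y \<in> {0..T} \<and> norm (x - y) < e / (2 * C + 1)"
      have "norm ((fh n x, mh n x) - (fh n y, mh n y)) \<le> \<bar>fh n x - fh n y\<bar> + \<bar>mh n x - mh n y\<bar>"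
        using norm_Pair_le[of "fh n x - fh n y" "mh n x - mh n y"] by simp
      also have "\<dots> \<le> (2 * C) * \<bar>x - y\<bar>" using flip[of n x y] mlip[of n x y] by simp
      also have "\<dots> \<le> (2 * C + 1) * \<bar>x - y\<bar>" by (intro mult_right_mono) auto
      also have "\<dots> < (2 * C + 1) * (e / (2 * C + 1))" using y C0 by (intro mult_strict_left_mono) auto
      also have "\<dots> = e" using C0 by simp
      finally show "norm ((fh n x, mh n x) - (fh n y, mh n y)) < e" .
    qed
  qed blast
  have gAl: "(\<lambda>n. (fh (kA n) x, mh (kA n) x)) \<longlonglongrightarrow> gA x" if "x \<in> {0..T}" for x
  proof (rule LIMSEQ_I)
    fix r :: real assume "0 < r"
    from gAu[OF this] obtain N where "\<forall>n x. n \<ge> N \<and> x \<in> {0..T} \<longrightarrow> norm ((fh (kA n) x, mh (kA n) x) - gA x) < r" by blast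
    then show "\<exists>no. \<forall>n\<ge>no. norm ((fh (kA n) x, mh (kA n) x) - gA x) < r" using that by blast
  qed
  define fs where "fs t = fst (gA (clT T t))" for t
  define ms where "ms t = snd (gA (clT T t))" for t
  have fsl: "(\<lambda>n. fh (kA n) t) \<longlonglongrightarrow> fs t" for t
    using tendsto_fst[OF gAl[OF clT_range[OF T0, of t]]] fhcl unfolding fs_def by simp
  have msl: "(\<lambda>n. mh (kA n) t) \<longlonglongrightarrow> ms t" for t
    using tendsto_snd[OF gAl[OF clT_range[OF T0, of t]]] fhcl unfolding ms_def by simp
  have fsc: "continuous_on UNIV fs" unfolding fs_def
    by (rule cont_clT[OF continuous_on_fst[OF gAc] T0])
  have msc: "continuous_on UNIV ms" unfolding ms_def
    by (rule cont_clT[OF continuous_on_snd[OF gAc] T0])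
  have fsm[measurable]: "fs \<in> borel_measurable lborel" using borel_measurable_continuous_onI[OF fsc] by simp
  have msm[measurable]: "ms \<in> borel_measurable lborel" using borel_measurable_continuous_onI[OF msc] by simp
  have sbox: "0 \<le> fs t \<and> 0 \<le> ms t \<and> fs t + ms t \<le> M" for t
  proof (intro conjI)
    show "0 \<le> fs t" by (rule LIMSEQ_le_const[OF fsl]) (use box in auto)
    show "0 \<le> ms t" by (rule LIMSEQ_le_const[OF msl]) (use box in auto)
    show "fs t + ms t \<le> M" by (rule LIMSEQ_le_const2[OF tendsto_add[OF fsl msl]]) (use box in auto)
  qed
  have sbd: "\<bar>fs t\<bar> \<le> M" "\<bar>ms t\<bar> \<le> M" for t using sbox[of t] by auto
  define x where "x j t = (eh1 (kA j) t, eh2 (kA j) t)" for j t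
  have xm[measurable]: "x j \<in> borel_measurable lborel" for j unfolding x_def[abs_def] by measurable
  have xb: "norm (x j t) \<le> 2" for j t
    using norm_Pair_le[of "eh1 (kA j) t" "eh2 (kA j) t"] e1b[of "kA j" t] e2b[of "kA j" t] by (simp add: x_def)
  have xz: "x j t = 0" if "t \<notin> {0..T}" for j t using that by (simp add: x_def eh1_def eh2_def zero_prod_def)
  obtain w NN where w0: "\<And>k j. 0 \<le> w k j" and w1: "\<And>k. (\<Sum>j<NN k. w k j) = 1" and wz: "\<And>k j. j < k \<Longrightarrow> w k j = 0"
    and AEc: "AE t in lborel. convergent (\<lambda>k. \<Sum>j<NN k. w k j *\<^sub>R x j t)"
    using mazur[of "{0..T}" x 2] xm xb xz by (auto simp: emeasure_lborel_Icc_eq)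
  define hc where "hc k t = (\<Sum>j<NN k. w k j *\<^sub>R x j t)" for k t
  have hcm[measurable]: "hc k \<in> borel_measurable lborel" for k unfolding hc_def[abs_def] by measurable
  define h1 where "h1 k t = (\<Sum>j<NN k. w k j * eh1 (kA j) t)" for k t
  define h2 where "h2 k t = (\<Sum>j<NN k. w k j * eh2 (kA j) t)" for k t
  have hc12: "hc k t = (h1 k t, h2 k t)" for k t
    unfolding hc_def h1_def h2_def x_def by (simp add: fst_sum snd_sum prod_eq_iff)
  have h1m[measurable]: "h1 k \<in> borel_measurable lborel" for k unfolding h1_def[abs_def] by measurable
  have h2m[measurable]: "h2 k \<in> borel_measurable lborel" for k unfolding h2_def[abs_def] by measurable
  have hb01: "0 \<le> (\<Sum>j<NN k. w k j * a j) \<and> (\<Sum>j<NN k. w k j * a j) \<le> 1" if "\<And>j. 0 \<le> a j \<and> a j \<le> 1" for k a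
  proof
    show "0 \<le> (\<Sum>j<NN k. w k j * a j)" using w0 that by (intro sum_nonneg) auto
    have "(\<Sum>j<NN k. w k j * a j) \<le> (\<Sum>j<NN k. w k j * 1)" using w0 that by (intro sum_mono mult_left_mono) auto
    then show "(\<Sum>j<NN k. w k j * a j) \<le> 1" using w1[of k] by simp
  qed
  have h1b: "0 \<le> h1 k t \<and> h1 k t \<le> 1" for k t unfolding h1_def by (rule hb01) (use e1b in auto)
  have h2b: "0 \<le> h2 k t \<and> h2 k t \<le> 1" for k t unfolding h2_def by (rule hb01) (use e2b in auto)
  define y where "y t = lim (\<lambda>k. hc k t)" for t
  have ym[measurable]: "y \<in> borel_measurable lborel" unfolding y_def[abs_def] by measurable
  have fstm: "fst \<in> borel_measurable (borel :: (real \<times> real) measure)"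
    by (rule borel_measurable_continuous_onI) (simp add: continuous_on_fst[OF continuous_on_id])
  have sndm: "snd \<in> borel_measurable (borel :: (real \<times> real) measure)"
    by (rule borel_measurable_continuous_onI) (simp add: continuous_on_snd[OF continuous_on_id])
  define y1 where "y1 t = fst (y t)" for t
  define y2 where "y2 t = snd (y t)" for t
  have y1m[measurable]: "y1 \<in> borel_measurable lborel"
    unfolding y1_def[abs_def] by (rule measurable_compose[OF ym fstm])
  have y2m[measurable]: "y2 \<in> borel_measurable lborel"
    unfolding y2_def[abs_def] by (rule measurable_compose[OF ym sndm])
  define \<eta>1 where "\<eta>1 t = (if t \<in> {0..T} then max 0 (min 1 (y1 t)) else 0)" for t
  define \<eta>2 where "\<eta>2 t = (if t \<in> {0..T} then max 0 (min 1 (y2 t)) else 0)" for t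
  have \<eta>1m[measurable]: "\<eta>1 \<in> borel_measurable lborel" unfolding \<eta>1_def[abs_def] by measurable
  have \<eta>2m[measurable]: "\<eta>2 \<in> borel_measurable lborel" unfolding \<eta>2_def[abs_def] by measurable
  have \<eta>1b: "0 \<le> \<eta>1 t \<and> \<eta>1 t \<le> 1" for t by (auto simp: \<eta>1_def)
  have \<eta>2b: "0 \<le> \<eta>2 t \<and> \<eta>2 t \<le> 1" for t by (auto simp: \<eta>2_def)
  have AEl: "AE t in lborel. t \<in> {0..T} \<longrightarrow> (\<lambda>k. h1 k t) \<longlonglongrightarrow> \<eta>1 t \<and> (\<lambda>k. h2 k t) \<longlonglongrightarrow> \<eta>2 t"
    using AEc
  proof eventually_elim
    case (elim t)
    show ?case
    proof
      assume t: "t \<in> {0..T}"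
      have l: "(\<lambda>k. hc k t) \<longlonglongrightarrow> y t" using elim unfolding y_def hc_def by (simp add: convergent_LIMSEQ_iff)
      have l1: "(\<lambda>k. h1 k t) \<longlonglongrightarrow> fst (y t)" using tendsto_fst[OF l] by (simp add: hc12)
      have l2: "(\<lambda>k. h2 k t) \<longlonglongrightarrow> snd (y t)" using tendsto_snd[OF l] by (simp add: hc12)
      have "0 \<le> fst (y t)" by (rule LIMSEQ_le_const[OF l1]) (use h1b in auto)
      moreover have "fst (y t) \<le> 1" by (rule LIMSEQ_le_const2[OF l1]) (use h1b in auto)
      moreover have "0 \<le> snd (y t)" by (rule LIMSEQ_le_const[OF l2]) (use h2b in auto)
      moreover have "snd (y t) \<le> 1" by (rule LIMSEQ_le_const2[OF l2]) (use h2b in auto)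
      ultimately have "\<eta>1 t = fst (y t)" "\<eta>2 t = snd (y t)" using t by (auto simp: \<eta>1_def \<eta>2_def y1_def y2_def)
      then show "(\<lambda>k. h1 k t) \<longlonglongrightarrow> \<eta>1 t \<and> (\<lambda>k. h2 k t) \<longlonglongrightarrow> \<eta>2 t" using l1 l2 by simp
    qed
  qed
  define R1 where "R1 n s = rhs_f \<beta> \<delta> K 0 (fh n s) (mh n s)" for n s
  define Rs1 where "Rs1 s = rhs_f \<beta> \<delta> K 0 (fs s) (ms s)" for s
  have R1m[measurable]: "R1 n \<in> borel_measurable lborel" for n unfolding R1_def[abs_def] rhs_f_def Lfac_def by measurable
  have Rs1m[measurable]: "Rs1 \<in> borel_measurable lborel" unfolding Rs1_def[abs_def] rhs_f_def Lfac_def by measurable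
  have R1b: "\<bar>R1 n s\<bar> \<le> C" for n s unfolding R1_def using box[of n s] by (intro rfb) auto
  have Rs1b: "\<bar>Rs1 s\<bar> \<le> C" for s unfolding Rs1_def using sbox[of s] by (intro rfb) auto
  have R1l: "(\<lambda>j. R1 (kA j) s) \<longlonglongrightarrow> Rs1 s" for s
    unfolding R1_def Rs1_def rhs_f_def Lfac_def using pos by (intro tendsto_intros fsl msl) auto
  have feq_s: "fs t = f0 + Prim (\<lambda>s. rhs_f \<beta> \<delta> K (\<eta>1 s) (fs s) (ms s)) t" if t: "t \<in> {0..T}" for t
  proof -
    have pbB: "\<bar>eh1 n s * g s\<bar> \<le> B" if "\<And>s. \<bar>g s\<bar> \<le> B" for n s B and g :: "real \<Rightarrow> real"
    proof -
      have "\<bar>eh1 n s\<bar> * \<bar>g s\<bar> \<le> 1 * B" using e1b[of n s] that[of s] by (intro mult_mono) auto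
      then show ?thesis by (simp add: abs_mult)
    qed
    have pb: "\<bar>eh1 n s * g s\<bar> \<le> M" if "\<And>s. \<bar>g s\<bar> \<le> M" for n s and g :: "real \<Rightarrow> real"
      using pbB that by blast
    have dB: "\<bar>fh n s - fs s\<bar> \<le> 2 * M" for n s
      using fbd(1)[of n s] sbd(1)[of s] abs_triangle_ineq4[of "fh n s" "fs s"] by linarith
    have ef: "Prim (\<lambda>s. eh1 n s * fh n s) t = f0 + Prim (R1 n) t - fh n t" for n
    proof -
      have "Prim (\<lambda>s. rhs_f \<beta> \<delta> K (eh1 n s) (fh n s) (mh n s)) t = Prim (\<lambda>s. R1 n s - eh1 n s * fh n s) t"
        unfolding R1_def by (rule arg_cong[where f="\<lambda>g. Prim g t"]) (simp add: rhs_f_def fun_eq_iff)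
      also have "\<dots> = Prim (R1 n) t - Prim (\<lambda>s. eh1 n s * fh n s) t"
      proof (rule Prim_diff_int)
        show "set_integrable lborel {0..t} (R1 n)" by (rule sint_bdd'[OF _ R1b]) measurable
        show "set_integrable lborel {0..t} (\<lambda>s. eh1 n s * fh n s)"
          by (rule sint_bdd'[where B=M]) (use pb[OF fbd(1)] in auto)
      qed
      finally show ?thesis using fheq[OF t, of n] by simp
    qed
    have l1: "(\<lambda>j. Prim (R1 (kA j)) t) \<longlonglongrightarrow> Prim Rs1 t"
      by (rule Prim_lim[OF _ Rs1m R1b]) (use R1l in auto)
    have l2: "(\<lambda>j. Prim (\<lambda>s. eh1 (kA j) s * (fh (kA j) s - fs s)) t) \<longlonglongrightarrow> Prim (\<lambda>s. 0) t"
    proof (rule Prim_lim[where C="2*M"])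
      show "(\<lambda>s. eh1 (kA j) s * (fh (kA j) s - fs s)) \<in> borel_measurable lborel" for j by measurable
      show "(\<lambda>s. 0::real) \<in> borel_measurable lborel" by simp
      show "\<bar>eh1 (kA j) s * (fh (kA j) s - fs s)\<bar> \<le> 2 * M" for j s
      proof -
        have "\<bar>eh1 (kA j) s\<bar> * \<bar>fh (kA j) s - fs s\<bar> \<le> 1 * (2 * M)"
          using e1b[of "kA j" s] fbd[of "kA j" s] sbd[of s] by (intro mult_mono) auto
        then show ?thesis by (simp add: abs_mult)
      qed
      show "AE s in lborel. s \<in> {0..t} \<longrightarrow> (\<lambda>j. eh1 (kA j) s * (fh (kA j) s - fs s)) \<longlonglongrightarrow> 0"
      proof (rule AE_I2, rule impI)
        fix s
        have d0: "(\<lambda>j. \<bar>fh (kA j) s - fs s\<bar>) \<longlonglongrightarrow> 0"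
          using tendsto_rabs_zero[OF LIM_zero[OF fsl[of s]]] by simp
        show "(\<lambda>j. eh1 (kA j) s * (fh (kA j) s - fs s)) \<longlonglongrightarrow> 0"
        proof (rule Lim_null_comparison[OF _ d0])
          show "\<forall>\<^sub>F j in sequentially. norm (eh1 (kA j) s * (fh (kA j) s - fs s)) \<le> \<bar>fh (kA j) s - fs s\<bar>"
          proof (rule always_eventually, rule allI)
            fix j
            have "\<bar>eh1 (kA j) s\<bar> * \<bar>fh (kA j) s - fs s\<bar> \<le> 1 * \<bar>fh (kA j) s - fs s\<bar>"
              using e1b[of "kA j" s] by (intro mult_right_mono) auto
            then show "norm (eh1 (kA j) s * (fh (kA j) s - fs s)) \<le> \<bar>fh (kA j) s - fs s\<bar>" by (simp add: abs_mult)
          qed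
        qed
      qed
    qed
    have Xeq: "Prim (\<lambda>s. eh1 (kA j) s * fs s) t = f0 + Prim (R1 (kA j)) t - fh (kA j) t - Prim (\<lambda>s. eh1 (kA j) s * (fh (kA j) s - fs s)) t" for j
    proof -
      have "Prim (\<lambda>s. eh1 (kA j) s * fs s) t = Prim (\<lambda>s. eh1 (kA j) s * fh (kA j) s - eh1 (kA j) s * (fh (kA j) s - fs s)) t"
        by (rule arg_cong[where f="\<lambda>g. Prim g t"]) (simp add: fun_eq_iff algebra_simps)
      also have "\<dots> = Prim (\<lambda>s. eh1 (kA j) s * fh (kA j) s) t - Prim (\<lambda>s. eh1 (kA j) s * (fh (kA j) s - fs s)) t"
      proof (rule Prim_diff_int)
        show "set_integrable lborel {0..t} (\<lambda>s. eh1 (kA j) s * fh (kA j) s)"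
          by (rule sint_bdd'[where B=M]) (use pb[OF fbd(1)] in auto)
        show "set_integrable lborel {0..t} (\<lambda>s. eh1 (kA j) s * (fh (kA j) s - fs s))"
          by (rule sint_bdd'[where B="2*M"]) (use pbB[OF dB] in auto)
      qed
      finally show ?thesis using ef[of "kA j"] by simp
    qed
    have key1: "(\<lambda>j. Prim (\<lambda>s. eh1 (kA j) s * fs s) t) \<longlonglongrightarrow> f0 + Prim Rs1 t - fs t - 0"
      unfolding Xeq using l2 by (intro tendsto_intros l1 fsl) (simp add: Prim_def)
    have key2: "(\<lambda>k. \<Sum>j<NN k. w k j * Prim (\<lambda>s. eh1 (kA j) s * fs s) t) \<longlonglongrightarrow> f0 + Prim Rs1 t - fs t"
      using tail_conv[OF key1 w0 w1 wz] by simp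
    have key3: "(\<Sum>j<NN k. w k j * Prim (\<lambda>s. eh1 (kA j) s * fs s) t) = Prim (\<lambda>s. h1 k s * fs s) t" for k
    proof -
      have "Prim (\<lambda>s. h1 k s * fs s) t = Prim (\<lambda>s. \<Sum>j<NN k. w k j * (eh1 (kA j) s * fs s)) t"
        unfolding h1_def by (rule arg_cong[where f="\<lambda>g. Prim g t"]) (simp add: fun_eq_iff sum_distrib_right mult.assoc)
      also have "\<dots> = (\<Sum>j<NN k. w k j * Prim (\<lambda>s. eh1 (kA j) s * fs s) t)"
        by (rule Prim_sum[where B=M]) (use pb[OF sbd(1)] in auto)
      finally show ?thesis by simp
    qed
    have key4: "(\<lambda>k. Prim (\<lambda>s. h1 k s * fs s) t) \<longlonglongrightarrow> Prim (\<lambda>s. \<eta>1 s * fs s) t"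
    proof (rule Prim_lim[where C=M])
      show "(\<lambda>s. h1 k s * fs s) \<in> borel_measurable lborel" for k by measurable
      show "(\<lambda>s. \<eta>1 s * fs s) \<in> borel_measurable lborel" by measurable
      show "\<bar>h1 k s * fs s\<bar> \<le> M" for k s
      proof -
        have "\<bar>h1 k s\<bar> * \<bar>fs s\<bar> \<le> 1 * M" using h1b[of k s] sbd[of s] by (intro mult_mono) auto
        then show ?thesis by (simp add: abs_mult)
      qed
      show "AE s in lborel. s \<in> {0..t} \<longrightarrow> (\<lambda>k. h1 k s * fs s) \<longlonglongrightarrow> \<eta>1 s * fs s"
        using AEl by eventually_elim (use t in \<open>auto intro: tendsto_mult_right\<close>)
    qed
    have Pe: "Prim (\<lambda>s. \<eta>1 s * fs s) t = f0 + Prim Rs1 t - fs t"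
      using LIMSEQ_unique[OF key4] key2 unfolding key3 by blast
    have "Prim (\<lambda>s. rhs_f \<beta> \<delta> K (\<eta>1 s) (fs s) (ms s)) t = Prim (\<lambda>s. Rs1 s - \<eta>1 s * fs s) t"
      unfolding Rs1_def by (rule arg_cong[where f="\<lambda>g. Prim g t"]) (simp add: rhs_f_def fun_eq_iff)
    also have "\<dots> = Prim Rs1 t - Prim (\<lambda>s. \<eta>1 s * fs s) t"
    proof (rule Prim_diff_int)
      show "set_integrable lborel {0..t} Rs1" by (rule sint_bdd'[OF _ Rs1b]) measurable
      show "set_integrable lborel {0..t} (\<lambda>s. \<eta>1 s * fs s)"
      proof (rule sint_bdd'[where B=M])
        show "(\<lambda>s. \<eta>1 s * fs s) \<in> borel_measurable lborel" by measurable
        show "\<bar>\<eta>1 s * fs s\<bar> \<le> M" for s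
        proof -
          have "\<bar>\<eta>1 s\<bar> * \<bar>fs s\<bar> \<le> 1 * M" using \<eta>1b[of s] sbd[of s] by (intro mult_mono) auto
          then show ?thesis by (simp add: abs_mult)
        qed
      qed
    qed
    finally show ?thesis using Pe by simp
  qed
  define R2 where "R2 n s = rhs_m \<beta> \<delta> K 0 (fh n s) (mh n s)" for n s
  define Rs2 where "Rs2 s = rhs_m \<beta> \<delta> K 0 (fs s) (ms s)" for s
  have R2m[measurable]: "R2 n \<in> borel_measurable lborel" for n unfolding R2_def[abs_def] rhs_m_def Lfac_def by measurable
  have Rs2m[measurable]: "Rs2 \<in> borel_measurable lborel" unfolding Rs2_def[abs_def] rhs_m_def Lfac_def by measurable
  have R2b: "\<bar>R2 n s\<bar> \<le> C" for n s unfolding R2_def using box[of n s] by (intro rmb) auto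
  have Rs2b: "\<bar>Rs2 s\<bar> \<le> C" for s unfolding Rs2_def using sbox[of s] by (intro rmb) auto
  have R2l: "(\<lambda>j. R2 (kA j) s) \<longlonglongrightarrow> Rs2 s" for s
    unfolding R2_def Rs2_def rhs_m_def Lfac_def using pos by (intro tendsto_intros fsl msl) auto
  have meq_s: "ms t = m0 + Prim (\<lambda>s. rhs_m \<beta> \<delta> K (\<eta>2 s) (fs s) (ms s)) t" if t: "t \<in> {0..T}" for t
  proof -
    have pbB: "\<bar>eh2 n s * g s\<bar> \<le> B" if "\<And>s. \<bar>g s\<bar> \<le> B" for n s B and g :: "real \<Rightarrow> real"
    proof -
      have "\<bar>eh2 n s\<bar> * \<bar>g s\<bar> \<le> 1 * B" using e2b[of n s] that[of s] by (intro mult_mono) auto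
      then show ?thesis by (simp add: abs_mult)
    qed
    have pb: "\<bar>eh2 n s * g s\<bar> \<le> M" if "\<And>s. \<bar>g s\<bar> \<le> M" for n s and g :: "real \<Rightarrow> real"
      using pbB that by blast
    have dB: "\<bar>mh n s - ms s\<bar> \<le> 2 * M" for n s
      using fbd(2)[of n s] sbd(2)[of s] abs_triangle_ineq4[of "mh n s" "ms s"] by linarith
    have ef: "Prim (\<lambda>s. eh2 n s * mh n s) t = m0 + Prim (R2 n) t - mh n t" for n
    proof -
      have "Prim (\<lambda>s. rhs_m \<beta> \<delta> K (eh2 n s) (fh n s) (mh n s)) t = Prim (\<lambda>s. R2 n s - eh2 n s * mh n s) t"
        unfolding R2_def by (rule arg_cong[where f="\<lambda>g. Prim g t"]) (simp add: rhs_m_def fun_eq_iff)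
      also have "\<dots> = Prim (R2 n) t - Prim (\<lambda>s. eh2 n s * mh n s) t"
      proof (rule Prim_diff_int)
        show "set_integrable lborel {0..t} (R2 n)" by (rule sint_bdd'[OF _ R2b]) measurable
        show "set_integrable lborel {0..t} (\<lambda>s. eh2 n s * mh n s)"
          by (rule sint_bdd'[where B=M]) (use pb[OF fbd(2)] in auto)
      qed
      finally show ?thesis using mheq[OF t, of n] by simp
    qed
    have l1: "(\<lambda>j. Prim (R2 (kA j)) t) \<longlonglongrightarrow> Prim Rs2 t"
      by (rule Prim_lim[OF _ Rs2m R2b]) (use R2l in auto)
    have l2: "(\<lambda>j. Prim (\<lambda>s. eh2 (kA j) s * (mh (kA j) s - ms s)) t) \<longlonglongrightarrow> Prim (\<lambda>s. 0) t"
    proof (rule Prim_lim[where C="2*M"])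
      show "(\<lambda>s. eh2 (kA j) s * (mh (kA j) s - ms s)) \<in> borel_measurable lborel" for j by measurable
      show "(\<lambda>s. 0::real) \<in> borel_measurable lborel" by simp
      show "\<bar>eh2 (kA j) s * (mh (kA j) s - ms s)\<bar> \<le> 2 * M" for j s
      proof -
        have "\<bar>eh2 (kA j) s\<bar> * \<bar>mh (kA j) s - ms s\<bar> \<le> 1 * (2 * M)"
          using e2b[of "kA j" s] fbd[of "kA j" s] sbd[of s] by (intro mult_mono) auto
        then show ?thesis by (simp add: abs_mult)
      qed
      show "AE s in lborel. s \<in> {0..t} \<longrightarrow> (\<lambda>j. eh2 (kA j) s * (mh (kA j) s - ms s)) \<longlonglongrightarrow> 0"
      proof (rule AE_I2, rule impI)
        fix s
        have d0: "(\<lambda>j. \<bar>mh (kA j) s - ms s\<bar>) \<longlonglongrightarrow> 0"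
          using tendsto_rabs_zero[OF LIM_zero[OF msl[of s]]] by simp
        show "(\<lambda>j. eh2 (kA j) s * (mh (kA j) s - ms s)) \<longlonglongrightarrow> 0"
        proof (rule Lim_null_comparison[OF _ d0])
          show "\<forall>\<^sub>F j in sequentially. norm (eh2 (kA j) s * (mh (kA j) s - ms s)) \<le> \<bar>mh (kA j) s - ms s\<bar>"
          proof (rule always_eventually, rule allI)
            fix j
            have "\<bar>eh2 (kA j) s\<bar> * \<bar>mh (kA j) s - ms s\<bar> \<le> 1 * \<bar>mh (kA j) s - ms s\<bar>"
              using e2b[of "kA j" s] by (intro mult_right_mono) auto
            then show "norm (eh2 (kA j) s * (mh (kA j) s - ms s)) \<le> \<bar>mh (kA j) s - ms s\<bar>" by (simp add: abs_mult)
          qed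
        qed
      qed
    qed
    have Xeq: "Prim (\<lambda>s. eh2 (kA j) s * ms s) t = m0 + Prim (R2 (kA j)) t - mh (kA j) t - Prim (\<lambda>s. eh2 (kA j) s * (mh (kA j) s - ms s)) t" for j
    proof -
      have "Prim (\<lambda>s. eh2 (kA j) s * ms s) t = Prim (\<lambda>s. eh2 (kA j) s * mh (kA j) s - eh2 (kA j) s * (mh (kA j) s - ms s)) t"
        by (rule arg_cong[where f="\<lambda>g. Prim g t"]) (simp add: fun_eq_iff algebra_simps)
      also have "\<dots> = Prim (\<lambda>s. eh2 (kA j) s * mh (kA j) s) t - Prim (\<lambda>s. eh2 (kA j) s * (mh (kA j) s - ms s)) t"
      proof (rule Prim_diff_int)
        show "set_integrable lborel {0..t} (\<lambda>s. eh2 (kA j) s * mh (kA j) s)"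
          by (rule sint_bdd'[where B=M]) (use pb[OF fbd(2)] in auto)
        show "set_integrable lborel {0..t} (\<lambda>s. eh2 (kA j) s * (mh (kA j) s - ms s))"
          by (rule sint_bdd'[where B="2*M"]) (use pbB[OF dB] in auto)
      qed
      finally show ?thesis using ef[of "kA j"] by simp
    qed
    have key1: "(\<lambda>j. Prim (\<lambda>s. eh2 (kA j) s * ms s) t) \<longlonglongrightarrow> m0 + Prim Rs2 t - ms t - 0"
      unfolding Xeq using l2 by (intro tendsto_intros l1 msl) (simp add: Prim_def)
    have key2: "(\<lambda>k. \<Sum>j<NN k. w k j * Prim (\<lambda>s. eh2 (kA j) s * ms s) t) \<longlonglongrightarrow> m0 + Prim Rs2 t - ms t"
      using tail_conv[OF key1 w0 w1 wz] by simp
    have key3: "(\<Sum>j<NN k. w k j * Prim (\<lambda>s. eh2 (kA j) s * ms s) t) = Prim (\<lambda>s. h2 k s * ms s) t" for k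
    proof -
      have "Prim (\<lambda>s. h2 k s * ms s) t = Prim (\<lambda>s. \<Sum>j<NN k. w k j * (eh2 (kA j) s * ms s)) t"
        unfolding h2_def by (rule arg_cong[where f="\<lambda>g. Prim g t"]) (simp add: fun_eq_iff sum_distrib_right mult.assoc)
      also have "\<dots> = (\<Sum>j<NN k. w k j * Prim (\<lambda>s. eh2 (kA j) s * ms s) t)"
        by (rule Prim_sum[where B=M]) (use pb[OF sbd(2)] in auto)
      finally show ?thesis by simp
    qed
    have key4: "(\<lambda>k. Prim (\<lambda>s. h2 k s * ms s) t) \<longlonglongrightarrow> Prim (\<lambda>s. \<eta>2 s * ms s) t"
    proof (rule Prim_lim[where C=M])
      show "(\<lambda>s. h2 k s * ms s) \<in> borel_measurable lborel" for k by measurable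
      show "(\<lambda>s. \<eta>2 s * ms s) \<in> borel_measurable lborel" by measurable
      show "\<bar>h2 k s * ms s\<bar> \<le> M" for k s
      proof -
        have "\<bar>h2 k s\<bar> * \<bar>ms s\<bar> \<le> 1 * M" using h2b[of k s] sbd[of s] by (intro mult_mono) auto
        then show ?thesis by (simp add: abs_mult)
      qed
      show "AE s in lborel. s \<in> {0..t} \<longrightarrow> (\<lambda>k. h2 k s * ms s) \<longlonglongrightarrow> \<eta>2 s * ms s"
        using AEl by eventually_elim (use t in \<open>auto intro: tendsto_mult_right\<close>)
    qed
    have Pe: "Prim (\<lambda>s. \<eta>2 s * ms s) t = m0 + Prim Rs2 t - ms t"
      using LIMSEQ_unique[OF key4] key2 unfolding key3 by blast
    have "Prim (\<lambda>s. rhs_m \<beta> \<delta> K (\<eta>2 s) (fs s) (ms s)) t = Prim (\<lambda>s. Rs2 s - \<eta>2 s * ms s) t"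
      unfolding Rs2_def by (rule arg_cong[where f="\<lambda>g. Prim g t"]) (simp add: rhs_m_def fun_eq_iff)
    also have "\<dots> = Prim Rs2 t - Prim (\<lambda>s. \<eta>2 s * ms s) t"
    proof (rule Prim_diff_int)
      show "set_integrable lborel {0..t} Rs2" by (rule sint_bdd'[OF _ Rs2b]) measurable
      show "set_integrable lborel {0..t} (\<lambda>s. \<eta>2 s * ms s)"
      proof (rule sint_bdd'[where B=M])
        show "(\<lambda>s. \<eta>2 s * ms s) \<in> borel_measurable lborel" by measurable
        show "\<bar>\<eta>2 s * ms s\<bar> \<le> M" for s
        proof -
          have "\<bar>\<eta>2 s\<bar> * \<bar>ms s\<bar> \<le> 1 * M" using \<eta>2b[of s] sbd[of s] by (intro mult_mono) auto
          then show ?thesis by (simp add: abs_mult)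
        qed
      qed
    qed
    finally show ?thesis using Pe by simp
  qed
  define Q where "Q n = Prim (\<lambda>t. (eh1 n t)\<^sup>2 + (eh2 n t)\<^sup>2) T" for n
  define S where "S n = Prim (\<lambda>t. fh n t + mh n t) T" for n
  have sq2: "\<bar>(a::real)\<^sup>2 + b\<^sup>2\<bar> \<le> 2" if "0 \<le> a \<and> a \<le> 1" "0 \<le> b \<and> b \<le> 1" for a b
  proof -
    have "a\<^sup>2 \<le> 1" "b\<^sup>2 \<le> 1" using that by (auto intro: power_le_one)
    then show ?thesis by simp
  qed
  have qm[measurable]: "(\<lambda>t. (eh1 n t)\<^sup>2 + (eh2 n t)\<^sup>2) \<in> borel_measurable lborel" for n by measurable
  have qb: "\<bar>(eh1 n t)\<^sup>2 + (eh2 n t)\<^sup>2\<bar> \<le> 2" for n t using sq2 e1b e2b by blast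
  have smb: "\<bar>fh n t + mh n t\<bar> \<le> M" for n t using box[of n t] by simp
  have JEs: "JE n = - S n - 1/2 * Q n" for n
  proof -
    have "JE n = Prim (\<lambda>t. (- (fh n t + mh n t)) - 1/2 * ((eh1 n t)\<^sup>2 + (eh2 n t)\<^sup>2)) T" by (rule JEeq)
    also have "\<dots> = Prim (\<lambda>t. - (fh n t + mh n t)) T - Prim (\<lambda>t. 1/2 * ((eh1 n t)\<^sup>2 + (eh2 n t)\<^sup>2)) T"
    proof (rule Prim_diff_int)
      show "set_integrable lborel {0..T} (\<lambda>t. - (fh n t + mh n t))"
      proof (rule sint_bdd'[where B=M])
        show "(\<lambda>t. - (fh n t + mh n t)) \<in> borel_measurable lborel" by measurable
        show "\<bar>- (fh n x + mh n x)\<bar> \<le> M" for x unfolding abs_minus_cancel by (rule smb)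
      qed
      show "set_integrable lborel {0..T} (\<lambda>t. 1/2 * ((eh1 n t)\<^sup>2 + (eh2 n t)\<^sup>2))"
      proof (rule sint_bdd'[where B=2])
        show "(\<lambda>t. 1/2 * ((eh1 n t)\<^sup>2 + (eh2 n t)\<^sup>2)) \<in> borel_measurable lborel" by measurable
        fix x
        have "\<bar>(eh1 n x)\<^sup>2 + (eh2 n x)\<^sup>2\<bar> \<le> 2" by (rule qb)
        then show "\<bar>1/2 * ((eh1 n x)\<^sup>2 + (eh2 n x)\<^sup>2)\<bar> \<le> 2" unfolding abs_mult by simp
      qed
    qed
    also have "\<dots> = - S n - 1/2 * Q n"
    proof -
      have a: "Prim (\<lambda>t. - (fh n t + mh n t)) T = - S n" unfolding S_def by (rule Prim_uminus)
      have b: "Prim (\<lambda>t. 1/2 * ((eh1 n t)\<^sup>2 + (eh2 n t)\<^sup>2)) T = 1/2 * Q n" unfolding Q_def by (rule Prim_cmult)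
      show ?thesis by (simp only: a b)
    qed
    finally show ?thesis .
  qed
  define Ss where "Ss = Prim (\<lambda>t. fs t + ms t) T"
  have Sl: "(\<lambda>j. S (kA j)) \<longlonglongrightarrow> Ss"
    unfolding S_def Ss_def
  proof (rule Prim_lim[where C=M])
    show "(\<lambda>t. fh (kA j) t + mh (kA j) t) \<in> borel_measurable lborel" for j by measurable
    show "(\<lambda>t. fs t + ms t) \<in> borel_measurable lborel" by measurable
    show "\<bar>fh (kA j) s + mh (kA j) s\<bar> \<le> M" for j s by (rule smb)
    show "AE s in lborel. s \<in> {0..T} \<longrightarrow> (\<lambda>j. fh (kA j) s + mh (kA j) s) \<longlonglongrightarrow> fs s + ms s"
      by (rule AE_I2) (intro impI tendsto_add fsl msl)
  qed
  have JEk: "(\<lambda>j. JE (kA j)) \<longlonglongrightarrow> Js" using LIMSEQ_subseq_LIMSEQ[OF JEl kA] by (simp add: comp_def)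
  have Qeq: "Q n = 2 * (- S n - JE n)" for n using JEs[of n] by simp
  have Ql: "(\<lambda>j. Q (kA j)) \<longlonglongrightarrow> 2 * (- Ss - Js)" unfolding Qeq by (intro tendsto_intros Sl JEk)
  have Qtail: "(\<lambda>k. \<Sum>j<NN k. w k j * Q (kA j)) \<longlonglongrightarrow> 2 * (- Ss - Js)" by (rule tail_conv[OF Ql w0 w1 wz])
  have nP: "(norm (a, b))\<^sup>2 = a\<^sup>2 + b\<^sup>2" for a b :: real by (simp add: norm_Pair)
  have cvx: "Prim (\<lambda>s. (h1 k s)\<^sup>2 + (h2 k s)\<^sup>2) T \<le> (\<Sum>j<NN k. w k j * Q (kA j))" for k
  proof -
    have "Prim (\<lambda>s. (h1 k s)\<^sup>2 + (h2 k s)\<^sup>2) T \<le> Prim (\<lambda>s. \<Sum>j<NN k. w k j * ((eh1 (kA j) s)\<^sup>2 + (eh2 (kA j) s)\<^sup>2)) T"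
    proof (rule Prim_mono[where B=2])
      show "(\<lambda>s. (h1 k s)\<^sup>2 + (h2 k s)\<^sup>2) \<in> borel_measurable lborel" by measurable
      show "(\<lambda>s. \<Sum>j<NN k. w k j * ((eh1 (kA j) s)\<^sup>2 + (eh2 (kA j) s)\<^sup>2)) \<in> borel_measurable lborel" by measurable
      show "\<bar>(h1 k s)\<^sup>2 + (h2 k s)\<^sup>2\<bar> \<le> 2" for s using sq2 h1b h2b by blast
      show "\<bar>\<Sum>j<NN k. w k j * ((eh1 (kA j) s)\<^sup>2 + (eh2 (kA j) s)\<^sup>2)\<bar> \<le> 2" for s
      proof -
        have "0 \<le> (\<Sum>j<NN k. w k j * ((eh1 (kA j) s)\<^sup>2 + (eh2 (kA j) s)\<^sup>2))" using w0 by (intro sum_nonneg) auto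
        moreover have "(\<Sum>j<NN k. w k j * ((eh1 (kA j) s)\<^sup>2 + (eh2 (kA j) s)\<^sup>2)) \<le> (\<Sum>j<NN k. w k j * 2)"
          using w0 qb by (intro sum_mono mult_left_mono) (auto simp: abs_le_iff)
        moreover have "(\<Sum>j<NN k. w k j * 2) = 2" using w1[of k] by (simp add: sum_distrib_right[symmetric])
        ultimately show ?thesis by simp
      qed
      show "(h1 k s)\<^sup>2 + (h2 k s)\<^sup>2 \<le> (\<Sum>j<NN k. w k j * ((eh1 (kA j) s)\<^sup>2 + (eh2 (kA j) s)\<^sup>2))" for s
      proof -
        have "(h1 k s)\<^sup>2 + (h2 k s)\<^sup>2 = (norm (hc k s))\<^sup>2" by (simp add: hc12 nP)
        also have "\<dots> \<le> (\<Sum>j<NN k. w k j * (norm (x j s))\<^sup>2)" unfolding hc_def by (rule convex_norm_sq[OF w0 w1])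
        also have "\<dots> = (\<Sum>j<NN k. w k j * ((eh1 (kA j) s)\<^sup>2 + (eh2 (kA j) s)\<^sup>2))" by (simp add: x_def nP)
        finally show ?thesis .
      qed
    qed
    also have "\<dots> = (\<Sum>j<NN k. w k j * Q (kA j))"
      unfolding Q_def by (rule Prim_sum[where B=2]) (use qb in auto)
    finally show ?thesis .
  qed
  have ql: "(\<lambda>k. Prim (\<lambda>s. (h1 k s)\<^sup>2 + (h2 k s)\<^sup>2) T) \<longlonglongrightarrow> Prim (\<lambda>s. (\<eta>1 s)\<^sup>2 + (\<eta>2 s)\<^sup>2) T"
  proof (rule Prim_lim[where C=2])
    show "(\<lambda>s. (h1 k s)\<^sup>2 + (h2 k s)\<^sup>2) \<in> borel_measurable lborel" for k by measurable
    show "(\<lambda>s. (\<eta>1 s)\<^sup>2 + (\<eta>2 s)\<^sup>2) \<in> borel_measurable lborel" by measurable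
    show "\<bar>(h1 k s)\<^sup>2 + (h2 k s)\<^sup>2\<bar> \<le> 2" for k s using sq2 h1b h2b by blast
    show "AE s in lborel. s \<in> {0..T} \<longrightarrow> (\<lambda>k. (h1 k s)\<^sup>2 + (h2 k s)\<^sup>2) \<longlonglongrightarrow> (\<eta>1 s)\<^sup>2 + (\<eta>2 s)\<^sup>2"
      using AEl by eventually_elim (auto intro: tendsto_intros)
  qed
  have costle: "Prim (\<lambda>s. (\<eta>1 s)\<^sup>2 + (\<eta>2 s)\<^sup>2) T \<le> 2 * (- Ss - Js)"
    by (rule LIMSEQ_le[OF ql Qtail]) (use cvx in auto)
  have Jstar: "Js \<le> J4 T \<eta>1 \<eta>2 fs ms"
  proof -
    have "J4 T \<eta>1 \<eta>2 fs ms = Prim (\<lambda>t. (- (fs t + ms t)) - 1/2 * ((\<eta>1 t)\<^sup>2 + (\<eta>2 t)\<^sup>2)) T"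
      unfolding J4_def Prim_def by simp
    also have "\<dots> = Prim (\<lambda>t. - (fs t + ms t)) T - Prim (\<lambda>t. 1/2 * ((\<eta>1 t)\<^sup>2 + (\<eta>2 t)\<^sup>2)) T"
    proof (rule Prim_diff_int)
      show "set_integrable lborel {0..T} (\<lambda>t. - (fs t + ms t))"
      proof (rule sint_bdd'[where B=M])
        show "(\<lambda>t. - (fs t + ms t)) \<in> borel_measurable lborel" by measurable
        show "\<bar>- (fs x + ms x)\<bar> \<le> M" for x unfolding abs_minus_cancel using sbox[of x] by simp
      qed
      show "set_integrable lborel {0..T} (\<lambda>t. 1/2 * ((\<eta>1 t)\<^sup>2 + (\<eta>2 t)\<^sup>2))"
      proof (rule sint_bdd'[where B=2])
        show "(\<lambda>t. 1/2 * ((\<eta>1 t)\<^sup>2 + (\<eta>2 t)\<^sup>2)) \<in> borel_measurable lborel" by measurable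
        fix x
        have "\<bar>(\<eta>1 x)\<^sup>2 + (\<eta>2 x)\<^sup>2\<bar> \<le> 2" by (rule sq2[OF \<eta>1b \<eta>2b])
        then show "\<bar>1/2 * ((\<eta>1 x)\<^sup>2 + (\<eta>2 x)\<^sup>2)\<bar> \<le> 2" unfolding abs_mult by simp
      qed
    qed
    also have "\<dots> = - Ss - 1/2 * Prim (\<lambda>t. (\<eta>1 t)\<^sup>2 + (\<eta>2 t)\<^sup>2) T"
    proof -
      have a: "Prim (\<lambda>t. - (fs t + ms t)) T = - Ss" unfolding Ss_def by (rule Prim_uminus)
      have b: "Prim (\<lambda>t. 1/2 * ((\<eta>1 t)\<^sup>2 + (\<eta>2 t)\<^sup>2)) T = 1/2 * Prim (\<lambda>t. (\<eta>1 t)\<^sup>2 + (\<eta>2 t)\<^sup>2) T" by (rule Prim_cmult)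
      show ?thesis by (simp only: a b)
    qed
    finally show ?thesis using costle by simp
  qed
  have rf_s: "\<bar>rhs_f \<beta> \<delta> K (\<eta>1 s) (fs s) (ms s)\<bar> \<le> C" for s using sbox[of s] \<eta>1b[of s] by (intro rfb) auto
  have rm_s: "\<bar>rhs_m \<beta> \<delta> K (\<eta>2 s) (fs s) (ms s)\<bar> \<le> C" for s using sbox[of s] \<eta>2b[of s] by (intro rmb) auto
  show ?thesis
  proof (intro exI conjI allI impI)
    show "(\<eta>1, \<eta>2) \<in> U4 T"
      unfolding U4_def set_borel_measurable_def using \<eta>1b \<eta>2b by auto
    show "is_state \<beta> \<delta> K T f0 m0 \<eta>1 \<eta>2 fs ms"
      unfolding is_state_def
    proof (intro conjI ballI)
      show "continuous_on {0..T} fs" using fsc by (auto intro: continuous_on_subset)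
      show "continuous_on {0..T} ms" using msc by (auto intro: continuous_on_subset)
      fix t assume t: "t \<in> {0..T}"
      show "set_integrable lborel {0..t} (\<lambda>s. rhs_f \<beta> \<delta> K (\<eta>1 s) (fs s) (ms s))"
        by (rule sint_bdd'[OF _ rf_s]) measurable
      show "set_integrable lborel {0..t} (\<lambda>s. rhs_m \<beta> \<delta> K (\<eta>2 s) (fs s) (ms s))"
        by (rule sint_bdd'[OF _ rm_s]) measurable
      show "fs t = f0 + (LINT s:{0..t}|lborel. rhs_f \<beta> \<delta> K (\<eta>1 s) (fs s) (ms s))"
        using feq_s[OF t] by (simp add: Prim_def)
      show "ms t = m0 + (LINT s:{0..t}|lborel. rhs_m \<beta> \<delta> K (\<eta>2 s) (fs s) (ms s))"
        using meq_s[OF t] by (simp add: Prim_def)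
    qed
    fix e1 e2 f m assume "(e1, e2) \<in> U4 T" "is_state \<beta> \<delta> K T f0 m0 e1 e2 f m"
    then have "J4 T e1 e2 f m \<le> Js" by (intro Jup) (simp add: Ad_def)
    then show "J4 T e1 e2 f m \<le> J4 T \<eta>1 \<eta>2 fs ms" using Jstar by linarith
  qed
qed

end
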